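(* Let $H$ be a finite-dimensional Hopf algebra over $\mathbb{C}$, $D(H)$ its Drinfeld double with Drinfeld element $u$, and regard $H$ and $H^*$ as subalgebras of $D(H)$. Let $g\in H$ and $\alpha\in H^*$ be grouplike elements such that $\alpha u^m g$ is unipotent in $D(H)$ for some positive integer $m$. Then $g=1$ and $\alpha=1$ (i.e. $\alpha=\varepsilon$, the counit).
   Context: The Drinfeld double $D(H)=H\otimes H^{*\mathrm{cop}}$ is a quasitriangular Hopf algebra containing $H$ and $H^{*\mathrm{cop}}$ as Hopf subalgebras, such that multiplication $H^*\otimes H\to D(H)$ is a linear isomorphism; its universal $R$-matrix is $R=\sum_i a_i\otimes b_i$ (the canonical element), and the Drinfeld element is $u=\sum_i S(b_i)a_i$, $S$ the antipode. An element $x$ is grouplike if $\Delta(x)=x\otimes x$ and $\varepsilon(x)=1$; unipotent means $x-1$ is nilpotent. *)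

theory Defs
  imports Complex_Main
begin

text \<open>A finite-dimensional complex Hopf algebra H is given by structure constants
  with respect to a basis e_i indexed by a finite type 'i.  Vectors of H are
  coordinate functions 'i \<Rightarrow> complex; elements of H* are coordinate functions
  w.r.t. the dual basis f^i (so f x = f(e_x)).
  M i j k : coefficient of e_k in e_i e_j;   U k : coefficient of e_k in 1;
  C k p q : coefficient of e_p \<otimes> e_q in Delta(e_k);   E i = epsilon(e_i);
  S i j : coefficient of e_j in S(e_i).\<close>

type_synonym 'i vec = "'i \<Rightarrow> complex"

definition bas :: "'i \<Rightarrow> 'i vec" where
  "bas i = (\<lambda>k. if k = i then 1 else 0)"

definition pair :: "('i::finite) vec \<Rightarrow> 'i vec \<Rightarrow> complex" where
  "pair f x = (\<Sum>k\<in>UNIV. f k * x k)"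

definition tens :: "'i vec \<Rightarrow> 'j vec \<Rightarrow> ('i \<times> 'j) \<Rightarrow> complex" where
  "tens x y = (\<lambda>(p, q). x p * y q)"

definition hmul :: "('i::finite \<Rightarrow> 'i \<Rightarrow> 'i \<Rightarrow> complex) \<Rightarrow> 'i vec \<Rightarrow> 'i vec \<Rightarrow> 'i vec" where
  "hmul M x y = (\<lambda>k. \<Sum>i\<in>UNIV. \<Sum>j\<in>UNIV. x i * y j * M i j k)"

definition comult :: "('i::finite \<Rightarrow> 'i \<Rightarrow> 'i \<Rightarrow> complex) \<Rightarrow> 'i vec \<Rightarrow> ('i \<times> 'i) \<Rightarrow> complex" where
  "comult C x = (\<lambda>(p, q). \<Sum>k\<in>UNIV. x k * C k p q)"

definition tmul :: "('i::finite \<Rightarrow> 'i \<Rightarrow> 'i \<Rightarrow> complex) \<Rightarrow> ('i \<times> 'i \<Rightarrow> complex) \<Rightarrow> ('i \<times> 'i \<Rightarrow> complex) \<Rightarrow> ('i \<times> 'i \<Rightarrow> complex)" where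
  "tmul M X Y = (\<lambda>(p, q). \<Sum>i\<in>UNIV. \<Sum>j\<in>UNIV. \<Sum>i'\<in>UNIV. \<Sum>j'\<in>UNIV.
       X (i, j) * Y (i', j') * M i i' p * M j j' q)"

definition lin :: "('i::finite \<Rightarrow> 'i \<Rightarrow> complex) \<Rightarrow> 'i vec \<Rightarrow> 'i vec" where
  "lin S x = (\<lambda>j. \<Sum>i\<in>UNIV. x i * S i j)"

definition hopf_algebra ::
  "('i::finite \<Rightarrow> 'i \<Rightarrow> 'i \<Rightarrow> complex) \<Rightarrow> 'i vec \<Rightarrow> ('i \<Rightarrow> 'i \<Rightarrow> 'i \<Rightarrow> complex) \<Rightarrow> 'i vec
     \<Rightarrow> ('i \<Rightarrow> 'i \<Rightarrow> complex) \<Rightarrow> bool" where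
  "hopf_algebra M U C E S \<longleftrightarrow>
     (\<forall>x y z. hmul M (hmul M x y) z = hmul M x (hmul M y z)) \<and>
     (\<forall>x. hmul M U x = x \<and> hmul M x U = x) \<and>
     (\<forall>a p q r. (\<Sum>k\<in>UNIV. C a k r * C k p q) = (\<Sum>k\<in>UNIV. C a p k * C k q r)) \<and>
     (\<forall>a j. (\<Sum>i\<in>UNIV. E i * C a i j) = (if a = j then 1 else 0)) \<and>
     (\<forall>a i. (\<Sum>j\<in>UNIV. C a i j * E j) = (if a = i then 1 else 0)) \<and>
     (\<forall>x y. comult C (hmul M x y) = tmul M (comult C x) (comult C y)) \<and>
     comult C U = tens U U \<and>
     (\<forall>x y. pair E (hmul M x y) = pair E x * pair E y) \<and>
     pair E U = 1 \<and>
     (\<forall>x. (\<lambda>k. \<Sum>i\<in>UNIV. \<Sum>j\<in>UNIV. comult C x (i, j) * hmul M (lin S (bas i)) (bas j) k)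
           = (\<lambda>k. pair E x * U k)) \<and>
     (\<forall>x. (\<lambda>k. \<Sum>i\<in>UNIV. \<Sum>j\<in>UNIV. comult C x (i, j) * hmul M (bas i) (lin S (bas j)) k)
           = (\<lambda>k. pair E x * U k))"

definition grouplike :: "('i::finite \<Rightarrow> 'i \<Rightarrow> 'i \<Rightarrow> complex) \<Rightarrow> 'i vec \<Rightarrow> 'i vec \<Rightarrow> bool" where
  "grouplike C E g \<longleftrightarrow> comult C g = tens g g \<and> pair E g = 1"

text \<open>Hopf structure of H^{*cop}: comultiplication (cop of the dual of
  multiplication), counit = evaluation at 1, product = convolution,
  antipode f \<mapsto> f \<circ> S^{-1}.\<close>
definition dcomult :: "('i::finite \<Rightarrow> 'i \<Rightarrow> 'i \<Rightarrow> complex) \<Rightarrow> 'i vec \<Rightarrow> ('i \<times> 'i) \<Rightarrow> complex" where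
  "dcomult M f = (\<lambda>(p, q). pair f (hmul M (bas q) (bas p)))"

definition dual_grouplike :: "('i::finite \<Rightarrow> 'i \<Rightarrow> 'i \<Rightarrow> complex) \<Rightarrow> 'i vec \<Rightarrow> 'i vec \<Rightarrow> bool" where
  "dual_grouplike M U f \<longleftrightarrow> dcomult M f = tens f f \<and> pair f U = 1"

definition conv :: "('i::finite \<Rightarrow> 'i \<Rightarrow> 'i \<Rightarrow> complex) \<Rightarrow> 'i vec \<Rightarrow> 'i vec \<Rightarrow> 'i vec" where
  "conv C f g = (\<lambda>x. \<Sum>p\<in>UNIV. \<Sum>q\<in>UNIV. C x p q * f p * g q)"

definition Sinv :: "('i::finite \<Rightarrow> 'i \<Rightarrow> complex) \<Rightarrow> 'i vec \<Rightarrow> 'i vec" where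
  "Sinv S = inv (lin S)"

definition dual_antipode :: "('i::finite \<Rightarrow> 'i \<Rightarrow> complex) \<Rightarrow> 'i vec \<Rightarrow> 'i vec" where
  "dual_antipode S f = (\<lambda>x. pair f (Sinv S (bas x)))"

text \<open>h \<rightharpoonup> f \<leftharpoonup> h' : x \<mapsto> f(h' x h)\<close>
definition hit :: "('i::finite \<Rightarrow> 'i \<Rightarrow> 'i \<Rightarrow> complex) \<Rightarrow> 'i vec \<Rightarrow> 'i vec \<Rightarrow> 'i vec \<Rightarrow> 'i vec" where
  "hit M h f h' = (\<lambda>x. pair f (hmul M (hmul M h' (bas x)) h))"

text \<open>Drinfeld double D(H) = H^{*cop} \<bowtie> H (Montgomery's convention).  An element
  is a coordinate function on pairs (a,b), standing for sum X(a,b) f^a e_b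
  (product in D(H) of f^a in H* and e_b in H).  Multiplication:
  (f \<bowtie> h)(f' \<bowtie> h') = f (h_1 \<rightharpoonup> f' \<leftharpoonup> S^{-1} h_3) \<bowtie> h_2 h'.\<close>
definition dmul :: "('i::finite \<Rightarrow> 'i \<Rightarrow> 'i \<Rightarrow> complex) \<Rightarrow> ('i \<Rightarrow> 'i \<Rightarrow> 'i \<Rightarrow> complex)
     \<Rightarrow> ('i \<Rightarrow> 'i \<Rightarrow> complex) \<Rightarrow> ('i \<times> 'i \<Rightarrow> complex) \<Rightarrow> ('i \<times> 'i \<Rightarrow> complex) \<Rightarrow> ('i \<times> 'i \<Rightarrow> complex)" where
  "dmul M C S X Y = (\<lambda>(x, z).
     \<Sum>a\<in>UNIV. \<Sum>b\<in>UNIV. \<Sum>c\<in>UNIV. \<Sum>d\<in>UNIV. X (a, b) * Y (c, d) *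
       (\<Sum>i\<in>UNIV. \<Sum>j\<in>UNIV. \<Sum>k\<in>UNIV. (\<Sum>t\<in>UNIV. C b i t * C t j k) *
          tens (conv C (bas a) (hit M (bas i) (bas c) (Sinv S (bas k)))) (hmul M (bas j) (bas d)) (x, z)))"

definition dunit :: "'i vec \<Rightarrow> 'i vec \<Rightarrow> ('i \<times> 'i \<Rightarrow> complex)" where
  "dunit U E = tens E U"

definition emb_H :: "'i vec \<Rightarrow> 'i vec \<Rightarrow> ('i \<times> 'i \<Rightarrow> complex)" where
  "emb_H E h = tens E h"

definition emb_dual :: "'i vec \<Rightarrow> 'i vec \<Rightarrow> ('i \<times> 'i \<Rightarrow> complex)" where
  "emb_dual U f = tens f U"

fun dpow :: "('i::finite \<Rightarrow> 'i \<Rightarrow> 'i \<Rightarrow> complex) \<Rightarrow> ('i \<Rightarrow> 'i \<Rightarrow> 'i \<Rightarrow> complex)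
     \<Rightarrow> ('i \<Rightarrow> 'i \<Rightarrow> complex) \<Rightarrow> 'i vec \<Rightarrow> 'i vec \<Rightarrow> ('i \<times> 'i \<Rightarrow> complex) \<Rightarrow> nat \<Rightarrow> ('i \<times> 'i \<Rightarrow> complex)" where
  "dpow M C S U E X 0 = dunit U E"
| "dpow M C S U E X (Suc n) = dmul M C S X (dpow M C S U E X n)"

text \<open>Drinfeld element u = sum_i S(b_i) a_i with R = sum_i a_i \<otimes> b_i, a_i = e_i, b_i = f^i.\<close>
definition drinfeld_u :: "('i::finite \<Rightarrow> 'i \<Rightarrow> 'i \<Rightarrow> complex) \<Rightarrow> ('i \<Rightarrow> 'i \<Rightarrow> 'i \<Rightarrow> complex)
     \<Rightarrow> ('i \<Rightarrow> 'i \<Rightarrow> complex) \<Rightarrow> 'i vec \<Rightarrow> 'i vec \<Rightarrow> ('i \<times> 'i \<Rightarrow> complex)" where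
  "drinfeld_u M C S U E = (\<lambda>p. \<Sum>i\<in>UNIV.
      dmul M C S (emb_dual U (dual_antipode S (bas i))) (emb_H E (bas i)) p)"

definition unipotent :: "('i::finite \<Rightarrow> 'i \<Rightarrow> 'i \<Rightarrow> complex) \<Rightarrow> ('i \<Rightarrow> 'i \<Rightarrow> 'i \<Rightarrow> complex)
     \<Rightarrow> ('i \<Rightarrow> 'i \<Rightarrow> complex) \<Rightarrow> 'i vec \<Rightarrow> 'i vec \<Rightarrow> ('i \<times> 'i \<Rightarrow> complex) \<Rightarrow> bool" where
  "unipotent M C S U E X \<longleftrightarrow>
     (\<exists>n. dpow M C S U E (\<lambda>p. X p - dunit U E p) n = (\<lambda>_. 0))"

end

theory Submission
  imports Defs "HOL-Analysis.Analysis" "HOL-Computational_Algebra.Polynomial"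
begin

hide_type (open) Finite_Cartesian_Product.vec


lemma bas_mult_left: "bas i a * (x::complex) = (if a = i then x else 0)"
  by (simp add: bas_def)
lemma bas_mult_right: "(x::complex) * bas i a = (if a = i then x else 0)"
  by (simp add: bas_def)
lemma sum_bas_left[simp]: "(\<Sum>a\<in>(UNIV::'i::finite set). bas i a * f a) = (f i :: complex)"
  by (simp add: bas_mult_left)
lemma sum_bas_right[simp]: "(\<Sum>a\<in>(UNIV::'i::finite set). f a * bas i a) = (f i :: complex)"
  by (simp add: bas_mult_right)

definition ap :: "('i::finite \<Rightarrow> complex) \<Rightarrow> ('i \<Rightarrow> complex) \<Rightarrow> complex" where
  "ap x F = (\<Sum>k\<in>UNIV. x k * F k)"
definition ap2 :: "('i::finite \<Rightarrow> 'j::finite \<Rightarrow> complex) \<Rightarrow> ('i \<Rightarrow> 'j \<Rightarrow> complex) \<Rightarrow> complex" where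
  "ap2 X F = (\<Sum>p\<in>UNIV. \<Sum>q\<in>UNIV. X p q * F p q)"

lemma ap_cmult[simp]: "ap x (\<lambda>k. c * F k) = c * ap x F"
  by (simp add: ap_def sum_distrib_left mult_ac)
lemma ap_multc[simp]: "ap x (\<lambda>k. F k * c) = ap x F * c"
  by (simp add: ap_def sum_distrib_right mult_ac)
lemma ap_add[simp]: "ap x (\<lambda>k. F k + G k) = ap x F + ap x G"
  by (simp add: ap_def distrib_left sum.distrib)
lemma ap_diff[simp]: "ap x (\<lambda>k. F k - G k) = ap x F - ap x G"
  by (simp add: ap_def right_diff_distrib sum_subtractf)
lemma ap_zero[simp]: "ap x (\<lambda>k. 0) = 0"
  by (simp add: ap_def)
lemma ap_sum[simp]: "ap x (\<lambda>k. \<Sum>j\<in>A. F j k) = (\<Sum>j\<in>A. ap x (F j))"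
  unfolding ap_def sum_distrib_left by (rule sum.swap)
lemma ap_bas[simp]: "ap (bas i) F = F i"
  by (simp add: ap_def)
lemma ap_bas2[simp]: "ap x (bas i) = x i"
  by (simp add: ap_def)
lemma ap_swap: "ap x (\<lambda>i. ap y (\<lambda>j. F i j)) = ap y (\<lambda>j. ap x (\<lambda>i. F i j))"
  unfolding ap_def sum_distrib_left by (subst sum.swap) (simp add: mult.left_commute)

lemma ap2_cmult[simp]: "ap2 X (\<lambda>p q. c * F p q) = c * ap2 X F"
  by (simp add: ap2_def sum_distrib_left mult_ac)
lemma ap2_multc[simp]: "ap2 X (\<lambda>p q. F p q * c) = ap2 X F * c"
  by (simp add: ap2_def sum_distrib_right mult_ac)
lemma ap2_add[simp]: "ap2 X (\<lambda>p q. F p q + G p q) = ap2 X F + ap2 X G"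
  by (simp add: ap2_def distrib_left sum.distrib)
lemma ap2_diff[simp]: "ap2 X (\<lambda>p q. F p q - G p q) = ap2 X F - ap2 X G"
  by (simp add: ap2_def right_diff_distrib sum_subtractf)
lemma ap2_zero[simp]: "ap2 X (\<lambda>p q. 0) = 0"
  by (simp add: ap2_def)
lemma ap2_sum[simp]: "ap2 X (\<lambda>p q. \<Sum>j\<in>A. F j p q) = (\<Sum>j\<in>A. ap2 X (F j))"
  unfolding ap2_def sum_distrib_left sum.swap[of _ A] ..
lemma ap2_as_ap: "ap2 X F = ap (\<lambda>z. X (fst z) (snd z)) (\<lambda>z. F (fst z) (snd z))"
  unfolding ap2_def ap_def by (simp add: sum.cartesian_product case_prod_beta flip: UNIV_Times_UNIV)
lemma ap2_ap_swap: "ap2 X (\<lambda>p q. ap y (\<lambda>j. F p q j)) = ap y (\<lambda>j. ap2 X (\<lambda>p q. F p q j))"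
  unfolding ap2_as_ap by (rule ap_swap)
lemma ap2_swap: "ap2 X (\<lambda>p q. ap2 Y (\<lambda>r s. F p q r s)) = ap2 Y (\<lambda>r s. ap2 X (\<lambda>p q. F p q r s))"
  unfolding ap2_as_ap by (rule ap_swap)

lemma F_expand: "(F::'i::finite \<Rightarrow> complex) = (\<lambda>r. \<Sum>k\<in>UNIV. F k * bas k r)"
  by (rule ext) (simp add: bas_def if_distrib[of "\<lambda>x. _ * x"] sum.delta' cong: if_cong)
lemma ap_contract: "ap x (\<lambda>i. ap (Y i) F) = ap (\<lambda>l. ap x (\<lambda>i. Y i l)) F"
  unfolding ap_def sum_distrib_left sum_distrib_right
  by (subst sum.swap) (simp add: mult.assoc)
lemma ap_comm: "ap x y = ap y x" by (simp add: ap_def mult.commute)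
lemma ap_ext: "(\<And>l. X l = Y l) \<Longrightarrow> ap X F = ap Y F"
  by (simp add: ap_def)

lemma sw23: "(\<Sum>a\<in>A. \<Sum>b\<in>B. \<Sum>c\<in>C. f a b c) = (\<Sum>a\<in>A. \<Sum>c\<in>C. \<Sum>b\<in>B. f a b c)"
  by (rule sum.cong[OF refl], rule sum.swap)
lemma sw34: "(\<Sum>a\<in>A. \<Sum>b\<in>B. \<Sum>c\<in>C. \<Sum>d\<in>D. f a b c d) = (\<Sum>a\<in>A. \<Sum>b\<in>B. \<Sum>d\<in>D. \<Sum>c\<in>C. f a b c d)"
  by (rule sum.cong[OF refl], rule sum.cong[OF refl], rule sum.swap)

definition ap3 :: "('i::finite \<Rightarrow> 'j::finite \<Rightarrow> 'k::finite \<Rightarrow> complex) \<Rightarrow> ('i \<Rightarrow> 'j \<Rightarrow> 'k \<Rightarrow> complex) \<Rightarrow> complex" where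
  "ap3 X F = (\<Sum>p\<in>UNIV. \<Sum>q\<in>UNIV. \<Sum>r\<in>UNIV. X p q r * F p q r)"

lemma ap2_contract1: "ap2 X (\<lambda>t r. ap2 (Y t) (\<lambda>p q. F p q r)) = ap3 (\<lambda>p q r. \<Sum>t\<in>UNIV. X t r * Y t p q) F"
proof -
  have "ap2 X (\<lambda>t r. ap2 (Y t) (\<lambda>p q. F p q r)) = (\<Sum>t\<in>UNIV. \<Sum>r\<in>UNIV. \<Sum>p\<in>UNIV. \<Sum>q\<in>UNIV. X t r * Y t p q * F p q r)"
    by (simp only: ap2_def sum_distrib_left mult.assoc)
  also have "\<dots> = (\<Sum>t\<in>UNIV. \<Sum>p\<in>UNIV. \<Sum>r\<in>UNIV. \<Sum>q\<in>UNIV. X t r * Y t p q * F p q r)"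
    by (rule sw23)
  also have "\<dots> = (\<Sum>t\<in>UNIV. \<Sum>p\<in>UNIV. \<Sum>q\<in>UNIV. \<Sum>r\<in>UNIV. X t r * Y t p q * F p q r)"
    by (rule sw34)
  also have "\<dots> = (\<Sum>p\<in>UNIV. \<Sum>t\<in>UNIV. \<Sum>q\<in>UNIV. \<Sum>r\<in>UNIV. X t r * Y t p q * F p q r)"
    by (rule sum.swap)
  also have "\<dots> = (\<Sum>p\<in>UNIV. \<Sum>q\<in>UNIV. \<Sum>t\<in>UNIV. \<Sum>r\<in>UNIV. X t r * Y t p q * F p q r)"
    by (rule sw23)
  also have "\<dots> = (\<Sum>p\<in>UNIV. \<Sum>q\<in>UNIV. \<Sum>r\<in>UNIV. \<Sum>t\<in>UNIV. X t r * Y t p q * F p q r)"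
    by (rule sw34)
  also have "\<dots> = ap3 (\<lambda>p q r. \<Sum>t\<in>UNIV. X t r * Y t p q) F"
    by (simp add: ap3_def sum_distrib_right)
  finally show ?thesis .
qed

lemma ap2_contract2: "ap2 X (\<lambda>p t. ap2 (Y t) (\<lambda>q r. F p q r)) = ap3 (\<lambda>p q r. \<Sum>t\<in>UNIV. X p t * Y t q r) F"
proof -
  have "ap2 X (\<lambda>p t. ap2 (Y t) (\<lambda>q r. F p q r)) = (\<Sum>p\<in>UNIV. \<Sum>t\<in>UNIV. \<Sum>q\<in>UNIV. \<Sum>r\<in>UNIV. X p t * Y t q r * F p q r)"
    by (simp only: ap2_def sum_distrib_left mult.assoc)
  also have "\<dots> = (\<Sum>p\<in>UNIV. \<Sum>q\<in>UNIV. \<Sum>t\<in>UNIV. \<Sum>r\<in>UNIV. X p t * Y t q r * F p q r)"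
    by (rule sw23)
  also have "\<dots> = (\<Sum>p\<in>UNIV. \<Sum>q\<in>UNIV. \<Sum>r\<in>UNIV. \<Sum>t\<in>UNIV. X p t * Y t q r * F p q r)"
    by (rule sw34)
  also have "\<dots> = ap3 (\<lambda>p q r. \<Sum>t\<in>UNIV. X p t * Y t q r) F"
    by (simp add: ap3_def sum_distrib_right)
  finally show ?thesis .
qed

lemma if01_mult[simp]: "(if P then 1 else 0) * (x::complex) = (if P then x else 0)" by simp
lemma mult_if01[simp]: "(x::complex) * (if P then 1 else 0) = (if P then x else 0)" by simp

lemma F2_expand: "(F::'i::finite \<Rightarrow> 'j::finite \<Rightarrow> complex) = (\<lambda>x y. \<Sum>p\<in>UNIV. \<Sum>q\<in>UNIV. F p q * (bas p x * bas q y))"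
  by (intro ext) (simp add: bas_def if_distrib[of "\<lambda>x. _ * x"] sum.delta' cong: if_cong)
lemma ap2_sep1: "ap2 X (\<lambda>p q. G p * F q) = ap (\<lambda>q. ap (\<lambda>p. X p q) G) F"
  unfolding ap2_def ap_def sum_distrib_left sum_distrib_right
  by (subst sum.swap) (simp add: mult_ac)
lemma ap2_sep2: "ap2 X (\<lambda>p q. F p * G q) = ap (\<lambda>p. ap (X p) G) F"
  unfolding ap2_def ap_def sum_distrib_left sum_distrib_right
  by (simp add: mult_ac)
lemma ap2_bas2[simp]: "ap2 X (\<lambda>x y. bas p x * bas q y) = X p q"
  by (simp add: ap2_sep2)
lemma ap_ap2_contract: "ap x (\<lambda>k. ap2 (Y k) F) = ap2 (\<lambda>p q. ap x (\<lambda>k. Y k p q)) F"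
  unfolding ap2_as_ap ap_contract ..
lemma ap2_ext: "(\<And>p q. X p q = Y p q) \<Longrightarrow> ap2 X F = ap2 Y F"
  by (simp add: ap2_def)

lemma pair_ap: "pair f x = ap f x" by (simp add: pair_def ap_def)
lemma hmul_ap: "hmul M x y k = ap x (\<lambda>i. ap y (\<lambda>j. M i j k))"
  unfolding hmul_def ap_def sum_distrib_left mult.assoc ..
lemma comult_ap: "comult C x (p, q) = ap x (\<lambda>k. C k p q)"
  by (simp add: comult_def ap_def)
lemma lin_ap: "lin S x j = ap x (\<lambda>i. S i j)"
  by (simp add: lin_def ap_def)
lemma tens_ap: "tens x y (p,q) = x p * y q" by (simp add: tens_def)
lemma tmul_ap: "tmul M X Y (p, q) = ap2 (\<lambda>i j. X (i,j)) (\<lambda>i j. ap2 (\<lambda>i j. Y (i,j)) (\<lambda>i' j'. M i i' p * M j j' q))"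
  unfolding tmul_def ap2_def by (simp add: sum_distrib_left mult.assoc)

locale hopf =
  fixes M :: "'i::finite \<Rightarrow> 'i \<Rightarrow> 'i \<Rightarrow> complex" and U :: "'i vec"
    and C :: "'i \<Rightarrow> 'i \<Rightarrow> 'i \<Rightarrow> complex" and E :: "'i vec" and S :: "'i \<Rightarrow> 'i \<Rightarrow> complex"
  assumes H: "hopf_algebra M U C E S"
begin

lemma ax_assoc: "hmul M (hmul M x y) z = hmul M x (hmul M y z)"
  using H unfolding hopf_algebra_def by blast
lemma ax_unitL: "hmul M U x = x" using H unfolding hopf_algebra_def by blast
lemma ax_unitR: "hmul M x U = x" using H unfolding hopf_algebra_def by blast
lemma ax_coassoc: "(\<Sum>k\<in>UNIV. C a k r * C k p q) = (\<Sum>k\<in>UNIV. C a p k * C k q r)"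
  using H unfolding hopf_algebra_def by blast
lemma ax_counitL: "(\<Sum>i\<in>UNIV. E i * C a i j) = (if a = j then 1 else 0)"
  using H unfolding hopf_algebra_def by blast
lemma ax_counitR: "(\<Sum>j\<in>UNIV. C a i j * E j) = (if a = i then 1 else 0)"
  using H unfolding hopf_algebra_def by blast
lemma ax_dmult: "comult C (hmul M x y) = tmul M (comult C x) (comult C y)"
  using H unfolding hopf_algebra_def by blast
lemma ax_dU: "comult C U = tens U U"
  using H unfolding hopf_algebra_def by blast
lemma ax_emult: "pair E (hmul M x y) = pair E x * pair E y"
  using H unfolding hopf_algebra_def by blast
lemma ax_eU: "pair E U = 1"
  using H unfolding hopf_algebra_def by blast
lemma ax_antL: "(\<lambda>k. \<Sum>i\<in>UNIV. \<Sum>j\<in>UNIV. comult C x (i, j) * hmul M (lin S (bas i)) (bas j) k)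
           = (\<lambda>k. pair E x * U k)"
  using H unfolding hopf_algebra_def by blast
lemma ax_antR: "(\<lambda>k. \<Sum>i\<in>UNIV. \<Sum>j\<in>UNIV. comult C x (i, j) * hmul M (bas i) (lin S (bas j)) k)
           = (\<lambda>k. pair E x * U k)"
  using H unfolding hopf_algebra_def by blast


lemma hmul_bas: "hmul M (bas i) (bas j) = M i j"
  unfolding hmul_def by (simp add: mult.assoc flip: sum_distrib_left)

lemma assoc0: "ap (M i j) (\<lambda>t. M t k l) = ap (M j k) (\<lambda>t. M i t l)"
proof -
  have "hmul M (hmul M (bas i) (bas j)) (bas k) l = hmul M (bas i) (hmul M (bas j) (bas k)) l"
    by (simp add: ax_assoc)
  thus ?thesis unfolding hmul_bas by (simp add: hmul_ap)
qed

lemma assoc: "ap (M a b) (\<lambda>t. ap (M t c) F) = ap (M b c) (\<lambda>t. ap (M a t) F)"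
  unfolding ap_contract by (rule ap_ext) (rule assoc0)

lemma unitL0: "ap U (\<lambda>i. M i b k) = bas b k"
proof -
  have "hmul M U (bas b) k = bas b k" by (simp add: ax_unitL)
  thus ?thesis by (simp add: hmul_ap)
qed
lemma unitR0: "ap U (\<lambda>j. M a j k) = bas a k"
proof -
  have "hmul M (bas a) U k = bas a k" by (simp add: ax_unitR)
  thus ?thesis by (simp add: hmul_ap)
qed
lemma unitL: "ap U (\<lambda>i. ap (M i b) F) = F b"
  unfolding ap_contract unitL0 by simp
lemma unitR: "ap U (\<lambda>j. ap (M a j) F) = F a"
  unfolding ap_contract unitR0 by simp

lemma coassoc0: "ap (\<lambda>t. C a t r) (\<lambda>t. C t p q) = ap (C a p) (\<lambda>t. C t q r)"
  using ax_coassoc[of a r p q] by (simp add: ap_def)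

lemma coassoc: "ap2 (C a) (\<lambda>t r. ap2 (C t) (\<lambda>p q. F p q r)) = ap2 (C a) (\<lambda>p t. ap2 (C t) (\<lambda>q r. F p q r))"
  unfolding ap2_contract1 ap2_contract2 using coassoc0 by (simp add: ap3_def ap_def)

lemma counitL: "ap2 (C a) (\<lambda>p q. E p * F q) = F a"
  unfolding ap2_sep1 using ax_counitL[of a] by (simp add: ap_def mult.commute bas_def[symmetric])
lemma counitR: "ap2 (C a) (\<lambda>p q. F p * E q) = F a"
  unfolding ap2_sep2 using ax_counitR[of a] by (simp add: ap_def bas_def[symmetric])

lemma dmult0: "ap (M a b) (\<lambda>k. C k p q) = ap2 (C a) (\<lambda>i j. ap2 (C b) (\<lambda>i' j'. M i i' p * M j j' q))"
proof -
  have "comult C (hmul M (bas a) (bas b)) (p,q) = tmul M (comult C (bas a)) (comult C (bas b)) (p,q)"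
    by (simp add: ax_dmult)
  thus ?thesis unfolding hmul_bas comult_ap tmul_ap by simp
qed

lemma dmult: "ap (M a b) (\<lambda>k. ap2 (C k) F) = ap2 (C a) (\<lambda>a1 a2. ap2 (C b) (\<lambda>b1 b2. ap (M a1 b1) (\<lambda>p. ap (M a2 b2) (\<lambda>q. F p q))))"
  apply (subst (1 2) F2_expand[of F])
  by (simp add: ap_ap2_contract dmult0)


lemma dU0: "ap U (\<lambda>k. C k p q) = U p * U q"
  using fun_cong[OF ax_dU, of "(p,q)"] by (simp add: comult_ap tens_ap)
lemma dU: "ap U (\<lambda>k. ap2 (C k) F) = ap U (\<lambda>p. ap U (\<lambda>q. F p q))"
  apply (subst (1 2) F2_expand[of F])
  by (simp add: ap_ap2_contract dU0)

lemma emult: "ap (M a b) E = E a * E b"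
  using ax_emult[of "bas a" "bas b"] by (simp add: hmul_bas pair_ap ap_comm)
lemma eU: "ap U E = 1"
  using ax_eU by (simp add: pair_ap ap_comm)

lemma lin_bas: "lin S (bas i) = S i"
  by (simp add: lin_ap[abs_def])

lemma antL0: "ap2 (C a) (\<lambda>i j. ap (S i) (\<lambda>p. M p j k)) = E a * U k"
  using fun_cong[OF ax_antL[of "bas a"], of k]
  by (simp add: comult_ap hmul_ap lin_bas pair_ap ap2_def)
lemma antR0: "ap2 (C a) (\<lambda>i j. ap (S j) (\<lambda>p. M i p k)) = E a * U k"
  using fun_cong[OF ax_antR[of "bas a"], of k]
  by (simp add: comult_ap hmul_ap lin_bas pair_ap ap2_def)

lemma antL: "ap2 (C a) (\<lambda>p q. ap (S p) (\<lambda>r. ap (M r q) F)) = E a * ap U F"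
  apply (subst (1 2) F_expand[of F])
  by (simp add: antL0 sum_distrib_left mult_ac)
lemma antR: "ap2 (C a) (\<lambda>p q. ap (S q) (\<lambda>r. ap (M p r) F)) = E a * ap U F"
  apply (subst (1 2) F_expand[of F])
  by (simp add: antR0 sum_distrib_left mult_ac)

end

context hopf begin
abbreviation "mm a b G \<equiv> ap (M a b) G"
abbreviation "ss a G \<equiv> ap (S a) G"
abbreviation "dd a G \<equiv> ap2 (C a) G"
abbreviation "uu G \<equiv> ap U G"

lemma mm_ss: "mm p q (\<lambda>i. ss r (\<lambda>j. F i j)) = ss r (\<lambda>j. mm p q (\<lambda>i. F i j))" by (rule ap_swap)
lemma ss_mm: "ss r (\<lambda>j. mm p q (\<lambda>i. F i j)) = mm p q (\<lambda>i. ss r (\<lambda>j. F i j))" by (rule ap_swap)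
lemma mm_mm: "mm p q (\<lambda>i. mm r t (\<lambda>j. F i j)) = mm r t (\<lambda>j. mm p q (\<lambda>i. F i j))" by (rule ap_swap)
lemma ss_ss: "ss p (\<lambda>i. ss r (\<lambda>j. F i j)) = ss r (\<lambda>j. ss p (\<lambda>i. F i j))" by (rule ap_swap)
lemma uu_ss: "uu (\<lambda>i. ss r (\<lambda>j. F i j)) = ss r (\<lambda>j. uu (\<lambda>i. F i j))" by (rule ap_swap)
lemma uu_mm: "uu (\<lambda>i. mm p r (\<lambda>j. F i j)) = mm p r (\<lambda>j. uu (\<lambda>i. F i j))" by (rule ap_swap)
lemma dd_mm: "dd a (\<lambda>p q. mm r t (\<lambda>j. F p q j)) = mm r t (\<lambda>j. dd a (\<lambda>p q. F p q j))" by (rule ap2_ap_swap)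
lemma dd_ss: "dd a (\<lambda>p q. ss r (\<lambda>j. F p q j)) = ss r (\<lambda>j. dd a (\<lambda>p q. F p q j))" by (rule ap2_ap_swap)
lemma dd_dd: "dd a (\<lambda>p q. dd b (\<lambda>r t. F p q r t)) = dd b (\<lambda>r t. dd a (\<lambda>p q. F p q r t))" by (rule ap2_swap)

lemma counitL': "dd a (\<lambda>p q. F q * E p) = F a"
  using counitL[of a F] by (simp add: mult.commute)
lemma counitR': "dd a (\<lambda>p q. E q * F p) = F a"
  using counitR[of a F] by (simp add: mult.commute)
lemma assoc3: "mm t v (\<lambda>\<beta>. mm s w (\<lambda>\<alpha>. mm \<alpha> \<beta> F)) = mm w t (\<lambda>\<delta>. mm \<delta> v (\<lambda>\<gamma>. mm s \<gamma> F))"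
proof -
  have "mm t v (\<lambda>\<beta>. mm s w (\<lambda>\<alpha>. mm \<alpha> \<beta> F)) = mm t v (\<lambda>\<beta>. mm w \<beta> (\<lambda>\<gamma>. mm s \<gamma> F))"
    by (simp only: assoc)
  also have "\<dots> = mm w t (\<lambda>\<delta>. mm \<delta> v (\<lambda>\<gamma>. mm s \<gamma> F))"
    by (rule assoc[symmetric])
  finally show ?thesis .
qed
lemma L56: "ss r (\<lambda>v. mm p q (\<lambda>w. mm w t (\<lambda>\<delta>. G \<delta> v))) = mm q t (\<lambda>\<eta>. ss r (\<lambda>v. mm p \<eta> (\<lambda>\<delta>. G \<delta> v)))"
proof -
  have "ss r (\<lambda>v. mm p q (\<lambda>w. mm w t (\<lambda>\<delta>. G \<delta> v))) = ss r (\<lambda>v. mm q t (\<lambda>\<eta>. mm p \<eta> (\<lambda>\<delta>. G \<delta> v)))"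
    by (simp only: assoc)
  also have "\<dots> = mm q t (\<lambda>\<eta>. ss r (\<lambda>v. mm p \<eta> (\<lambda>\<delta>. G \<delta> v)))"
    by (rule ap_swap)
  finally show ?thesis .
qed

lemma S_antimult: "mm a b (\<lambda>k. ss k F) = ss b (\<lambda>p. ss a (\<lambda>q. mm p q F))"
proof -
  define W where "W = dd a (\<lambda>x1 a'. dd a' (\<lambda>x2 x3. dd b (\<lambda>y1 b'. dd b' (\<lambda>y2 y3.
      mm x1 y1 (\<lambda>z. ss z (\<lambda>\<sigma>. mm x2 y2 (\<lambda>w. mm \<sigma> w (\<lambda>\<alpha>. ss y3 (\<lambda>t. ss x3 (\<lambda>v. mm t v (\<lambda>\<beta>. mm \<alpha> \<beta> F)))))))))))"
  have "W = dd a (\<lambda>x1 a'. dd a' (\<lambda>x2 x3. dd b (\<lambda>y1 b'. dd b' (\<lambda>y2 y3.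
      mm x1 y1 (\<lambda>z. ss z (\<lambda>\<sigma>. mm x2 y2 (\<lambda>w. ss y3 (\<lambda>t. ss x3 (\<lambda>v. mm t v (\<lambda>\<beta>. mm \<sigma> w (\<lambda>\<alpha>. mm \<alpha> \<beta> F)))))))))))"
    unfolding W_def apply (simp only: mm_ss) apply (subst mm_mm) by (rule refl)
  also have "\<dots> = dd a (\<lambda>x1 a'. dd a' (\<lambda>x2 x3. dd b (\<lambda>y1 b'. dd b' (\<lambda>y2 y3.
      mm x1 y1 (\<lambda>z. ss z (\<lambda>\<sigma>. ss y3 (\<lambda>t. ss x3 (\<lambda>v. mm x2 y2 (\<lambda>w. mm w t (\<lambda>\<delta>. mm \<delta> v (\<lambda>\<gamma>. mm \<sigma> \<gamma> F)))))))))))"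
    by (simp only: assoc3 mm_ss)
  also have "\<dots> = dd a (\<lambda>x1 a'. dd a' (\<lambda>x2 x3. dd b (\<lambda>y1 b'. dd b' (\<lambda>y2 y3.
      mm x1 y1 (\<lambda>z. ss z (\<lambda>\<sigma>. ss y3 (\<lambda>t. mm y2 t (\<lambda>\<eta>. ss x3 (\<lambda>v. mm x2 \<eta> (\<lambda>\<delta>. mm \<delta> v (\<lambda>\<gamma>. mm \<sigma> \<gamma> F)))))))))))"
    by (simp only: L56)
  also have "\<dots> = dd a (\<lambda>x1 a'. dd a' (\<lambda>x2 x3. dd b (\<lambda>y1 b'. 
      mm x1 y1 (\<lambda>z. ss z (\<lambda>\<sigma>. dd b' (\<lambda>y2 y3. ss y3 (\<lambda>t. mm y2 t (\<lambda>\<eta>. ss x3 (\<lambda>v. mm x2 \<eta> (\<lambda>\<delta>. mm \<delta> v (\<lambda>\<gamma>. mm \<sigma> \<gamma> F)))))))))))"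
    by (simp only: dd_mm dd_ss)
  also have "\<dots> = dd a (\<lambda>x1 a'. dd a' (\<lambda>x2 x3. dd b (\<lambda>y1 b'. 
      mm x1 y1 (\<lambda>z. ss z (\<lambda>\<sigma>. E b' * ss x3 (\<lambda>v. mm x2 v (\<lambda>\<gamma>. mm \<sigma> \<gamma> F)))))))"
    by (simp only: antR uu_ss unitR)
  also have "\<dots> = dd a (\<lambda>x1 a'. dd a' (\<lambda>x2 x3. mm x1 b (\<lambda>z. ss z (\<lambda>\<sigma>. ss x3 (\<lambda>v. mm x2 v (\<lambda>\<gamma>. mm \<sigma> \<gamma> F))))))"
    by (simp only: ap_cmult counitR')
  also have "\<dots> = dd a (\<lambda>x1 a'. mm x1 b (\<lambda>z. ss z (\<lambda>\<sigma>. dd a' (\<lambda>x2 x3. ss x3 (\<lambda>v. mm x2 v (\<lambda>\<gamma>. mm \<sigma> \<gamma> F))))))"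
    by (simp only: dd_mm dd_ss)
  also have "\<dots> = mm a b (\<lambda>z. ss z F)"
    by (simp only: antR unitR ap_cmult counitR')
  finally have WA: "W = mm a b (\<lambda>z. ss z F)" .
  have "W = dd a (\<lambda>a'' x3. dd a'' (\<lambda>x1 x2. dd b (\<lambda>b'' y3. dd b'' (\<lambda>y1 y2.
      mm x1 y1 (\<lambda>z. ss z (\<lambda>\<sigma>. mm x2 y2 (\<lambda>w. mm \<sigma> w (\<lambda>\<alpha>. ss y3 (\<lambda>t. ss x3 (\<lambda>v. mm t v (\<lambda>\<beta>. mm \<alpha> \<beta> F)))))))))))"
    unfolding W_def by (simp only: coassoc[symmetric])
  also have "\<dots> = dd a (\<lambda>a'' x3. dd b (\<lambda>b'' y3. dd a'' (\<lambda>x1 x2. dd b'' (\<lambda>y1 y2.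
      mm x1 y1 (\<lambda>z. mm x2 y2 (\<lambda>w. ss z (\<lambda>\<sigma>. mm \<sigma> w (\<lambda>\<alpha>. ss y3 (\<lambda>t. ss x3 (\<lambda>v. mm t v (\<lambda>\<beta>. mm \<alpha> \<beta> F)))))))))))"
    apply (subst dd_dd) by (simp only: ss_mm)
  also have "\<dots> = dd a (\<lambda>a'' x3. dd b (\<lambda>b'' y3. E a'' * E b'' * 
       uu (\<lambda>\<alpha>. ss y3 (\<lambda>t. ss x3 (\<lambda>v. mm t v (\<lambda>\<beta>. mm \<alpha> \<beta> F))))))"
    by (simp only: dmult[symmetric] antL ap_multc emult)
  also have "\<dots> = uu (\<lambda>\<alpha>. ss b (\<lambda>t. ss a (\<lambda>v. mm t v (\<lambda>\<beta>. mm \<alpha> \<beta> F))))"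
    by (simp only: mult.assoc ap2_cmult counitL)
  also have "\<dots> = ss b (\<lambda>p. ss a (\<lambda>q. mm p q F))"
    by (simp only: uu_ss uu_mm unitL)
  finally show ?thesis using WA by simp
qed


lemma ss_dd: "ss r (\<lambda>j. dd a (\<lambda>p q. F j p q)) = dd a (\<lambda>p q. ss r (\<lambda>j. F j p q))"
  by (rule ap2_ap_swap[symmetric])

lemma uu_dd: "uu (\<lambda>j. dd a (\<lambda>p q. F j p q)) = dd a (\<lambda>p q. uu (\<lambda>j. F j p q))"
  by (rule ap2_ap_swap[symmetric])

lemma TA: "mm a1 b1 (\<lambda>p1. mm a2 b2 (\<lambda>p2. mm p1 c (\<lambda>q1. mm p2 d (\<lambda>q2. G q1 q2))))
         = mm b1 c (\<lambda>e. mm b2 d (\<lambda>f. mm a1 e (\<lambda>q1. mm a2 f (\<lambda>q2. G q1 q2))))"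
proof -
  have "mm a1 b1 (\<lambda>p1. mm a2 b2 (\<lambda>p2. mm p1 c (\<lambda>q1. mm p2 d (\<lambda>q2. G q1 q2))))
      = mm a1 b1 (\<lambda>p1. mm p1 c (\<lambda>q1. mm a2 b2 (\<lambda>p2. mm p2 d (\<lambda>q2. G q1 q2))))"
    by (rule arg_cong[where f="mm a1 b1"], rule ext, rule ap_swap)
  also have "\<dots> = mm b1 c (\<lambda>e. mm a1 e (\<lambda>q1. mm b2 d (\<lambda>f. mm a2 f (\<lambda>q2. G q1 q2))))"
    by (simp only: assoc)
  also have "\<dots> = mm b1 c (\<lambda>e. mm b2 d (\<lambda>f. mm a1 e (\<lambda>q1. mm a2 f (\<lambda>q2. G q1 q2))))"
    by (rule arg_cong[where f="mm b1 c"], rule ext, rule ap_swap)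
  finally show ?thesis .
qed

lemma S_anticomult: "ss a (\<lambda>k. dd k G) = dd a (\<lambda>p q. ss q (\<lambda>x. ss p (\<lambda>y. G x y)))"
proof -
  define W where "W = dd a (\<lambda>t x4. dd t (\<lambda>s x3. dd s (\<lambda>x1 x2.
      ss x1 (\<lambda>k. dd k (\<lambda>a1 a2. dd x2 (\<lambda>b1 b2. mm a1 b1 (\<lambda>p1. mm a2 b2 (\<lambda>p2.
         ss x4 (\<lambda>c. ss x3 (\<lambda>d. mm p1 c (\<lambda>q1. mm p2 d (\<lambda>q2. G q1 q2))))))))))))"
  have "W = dd a (\<lambda>t x4. dd t (\<lambda>s x3. E s * ss x4 (\<lambda>c. ss x3 (\<lambda>d. G c d))))"
    unfolding W_def by (simp only: dmult[symmetric] antL dU uu_ss uu_mm unitL)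
  also have "\<dots> = dd a (\<lambda>p q. ss q (\<lambda>x. ss p (\<lambda>y. G x y)))"
    by (simp only: counitL)
  finally have WA: "W = dd a (\<lambda>p q. ss q (\<lambda>x. ss p (\<lambda>y. G x y)))" .
  have "W = dd a (\<lambda>t x4. dd t (\<lambda>s x3. dd s (\<lambda>x1 x2.
      ss x1 (\<lambda>k. dd k (\<lambda>a1 a2. dd x2 (\<lambda>b1 b2. ss x4 (\<lambda>c. ss x3 (\<lambda>d. 
        mm b1 c (\<lambda>e. mm b2 d (\<lambda>f. mm a1 e (\<lambda>q1. mm a2 f (\<lambda>q2. G q1 q2))))))))))))"
    unfolding W_def by (simp only: mm_ss TA)
  also have "\<dots> = dd a (\<lambda>t x4. dd t (\<lambda>s x3. dd s (\<lambda>x1 x2. dd x2 (\<lambda>b1 b2. 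
      ss x1 (\<lambda>k. dd k (\<lambda>a1 a2. ss x4 (\<lambda>c. ss x3 (\<lambda>d. 
        mm b1 c (\<lambda>e. mm b2 d (\<lambda>f. mm a1 e (\<lambda>q1. mm a2 f (\<lambda>q2. G q1 q2))))))))))))"
    apply (subst dd_dd) by (simp only: ss_dd)
  also have "\<dots> = dd a (\<lambda>t x4. dd t (\<lambda>s x3. dd s (\<lambda>u b2. dd u (\<lambda>x1 b1. 
      ss x1 (\<lambda>k. dd k (\<lambda>a1 a2. ss x4 (\<lambda>c. ss x3 (\<lambda>d. 
        mm b1 c (\<lambda>e. mm b2 d (\<lambda>f. mm a1 e (\<lambda>q1. mm a2 f (\<lambda>q2. G q1 q2))))))))))))"
    by (simp only: coassoc[symmetric])
  also have "\<dots> = dd a (\<lambda>t x4. dd t (\<lambda>u s'. dd s' (\<lambda>b2 x3. dd u (\<lambda>x1 b1. 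
      ss x1 (\<lambda>k. dd k (\<lambda>a1 a2. ss x4 (\<lambda>c. ss x3 (\<lambda>d. 
        mm b1 c (\<lambda>e. mm b2 d (\<lambda>f. mm a1 e (\<lambda>q1. mm a2 f (\<lambda>q2. G q1 q2))))))))))))"
  proof -
    have X: "dd a (\<lambda>t x4. dd t (\<lambda>s x3. dd s (\<lambda>u b2. \<Phi> x4 u b2 x3))) = dd a (\<lambda>t x4. dd t (\<lambda>u s'. dd s' (\<lambda>b2 x3. \<Phi> x4 u b2 x3)))" for \<Phi>
      by (rule arg_cong[where f="dd a"], rule ext, rule ext, rule coassoc)
    show ?thesis by (simp only: X)
  qed
  also have "\<dots> = dd a (\<lambda>t x4. dd t (\<lambda>u s'. E s' * dd u (\<lambda>x1 b1. 
      ss x1 (\<lambda>k. dd k (\<lambda>a1 a2. ss x4 (\<lambda>c. mm b1 c (\<lambda>e. mm a1 e (\<lambda>q1. G q1 a2))))))))"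
  proof -
    have X: "dd s' (\<lambda>b2 x3. dd u (\<lambda>x1 b1. 
      ss x1 (\<lambda>k. dd k (\<lambda>a1 a2. ss x4 (\<lambda>c. ss x3 (\<lambda>d. 
        mm b1 c (\<lambda>e. mm b2 d (\<lambda>f. mm a1 e (\<lambda>q1. mm a2 f (\<lambda>q2. G q1 q2))))))))))
      = E s' * dd u (\<lambda>x1 b1. 
      ss x1 (\<lambda>k. dd k (\<lambda>a1 a2. ss x4 (\<lambda>c. mm b1 c (\<lambda>e. mm a1 e (\<lambda>q1. G q1 a2))))))" for s' u x4
    proof -
      have "dd s' (\<lambda>b2 x3. dd u (\<lambda>x1 b1. 
        ss x1 (\<lambda>k. dd k (\<lambda>a1 a2. ss x4 (\<lambda>c. ss x3 (\<lambda>d. 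
          mm b1 c (\<lambda>e. mm b2 d (\<lambda>f. mm a1 e (\<lambda>q1. mm a2 f (\<lambda>q2. G q1 q2))))))))))
        = dd s' (\<lambda>b2 x3. dd u (\<lambda>x1 b1. 
        ss x1 (\<lambda>k. dd k (\<lambda>a1 a2. ss x4 (\<lambda>c. mm b1 c (\<lambda>e. ss x3 (\<lambda>d. 
          mm b2 d (\<lambda>f. mm a1 e (\<lambda>q1. mm a2 f (\<lambda>q2. G q1 q2))))))))))"
        by (simp only: ss_mm)
      also have "\<dots> = dd u (\<lambda>x1 b1. 
        ss x1 (\<lambda>k. dd k (\<lambda>a1 a2. ss x4 (\<lambda>c. mm b1 c (\<lambda>e. dd s' (\<lambda>b2 x3. ss x3 (\<lambda>d. 
          mm b2 d (\<lambda>f. mm a1 e (\<lambda>q1. mm a2 f (\<lambda>q2. G q1 q2))))))))))"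
        apply (subst dd_dd) apply (simp only: dd_ss dd_mm) apply (subst dd_dd) by (simp only: dd_ss dd_mm)
      also have "\<dots> = E s' * dd u (\<lambda>x1 b1. 
        ss x1 (\<lambda>k. dd k (\<lambda>a1 a2. ss x4 (\<lambda>c. mm b1 c (\<lambda>e. mm a1 e (\<lambda>q1. G q1 a2))))))"
        by (simp only: antR uu_mm unitR ap_cmult ap2_cmult)
      finally show ?thesis .
    qed
    show ?thesis by (simp only: X)
  qed
  also have "\<dots> = dd a (\<lambda>t x4. dd t (\<lambda>x1 b1. 
      ss x1 (\<lambda>k. dd k (\<lambda>a1 a2. ss x4 (\<lambda>c. mm b1 c (\<lambda>e. mm a1 e (\<lambda>q1. G q1 a2)))))))"
    by (simp only: counitR')
  also have "\<dots> = dd a (\<lambda>x1 s. dd s (\<lambda>b1 x4. 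
      ss x1 (\<lambda>k. dd k (\<lambda>a1 a2. ss x4 (\<lambda>c. mm b1 c (\<lambda>e. mm a1 e (\<lambda>q1. G q1 a2)))))))"
    by (rule coassoc)
  also have "\<dots> = dd a (\<lambda>x1 s. ss x1 (\<lambda>k. dd s (\<lambda>b1 x4. ss x4 (\<lambda>c. mm b1 c (\<lambda>e. dd k (\<lambda>a1 a2. mm a1 e (\<lambda>q1. G q1 a2)))))))"
    by (simp only: dd_ss dd_mm)
  also have "\<dots> = dd a (\<lambda>x1 s. E s * ss x1 (\<lambda>k. dd k (\<lambda>a1 a2. G a1 a2)))"
    by (simp only: antR uu_dd unitR ap_cmult ap2_cmult)
  also have "\<dots> = ss a (\<lambda>k. dd k G)"
    by (simp only: counitR')
  finally show ?thesis using WA by simp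
qed


lemma S1: "uu (\<lambda>p. ss p F) = uu F"
proof -
  have "uu (\<lambda>a. dd a (\<lambda>p q. ss p (\<lambda>r. mm r q F))) = uu (\<lambda>a. E a * uu F)"
    by (simp only: antL)
  also have "\<dots> = uu F" by (simp add: eU)
  finally have 1: "uu (\<lambda>a. dd a (\<lambda>p q. ss p (\<lambda>r. mm r q F))) = uu F" .
  have "uu (\<lambda>a. dd a (\<lambda>p q. ss p (\<lambda>r. mm r q F))) = uu (\<lambda>p. uu (\<lambda>q. ss p (\<lambda>r. mm r q F)))"
    by (rule dU)
  also have "\<dots> = uu (\<lambda>p. ss p (\<lambda>r. uu (\<lambda>q. mm r q F)))"
    by (simp only: uu_ss)
  also have "\<dots> = uu (\<lambda>p. ss p F)" by (simp only: unitR)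
  finally show ?thesis using 1 by simp
qed

lemma eS: "ss p E = E p"
proof -
  have "dd p (\<lambda>a b. ss a (\<lambda>r. mm r b E)) = E p * uu E" by (rule antL)
  thus ?thesis by (simp add: emult eU counitR)
qed

lemma ap_hmul: "ap (hmul M x y) G = ap x (\<lambda>i. ap y (\<lambda>j. mm i j G))"
proof -
  have "ap (hmul M x y) G = ap (\<lambda>k. ap x (\<lambda>i. ap y (\<lambda>j. M i j k))) G"
    by (simp add: hmul_ap[abs_def])
  also have "\<dots> = ap x (\<lambda>i. ap (\<lambda>k. ap y (\<lambda>j. M i j k)) G)"
    by (simp only: ap_contract)
  also have "\<dots> = ap x (\<lambda>i. ap y (\<lambda>j. mm i j G))"
    by (simp only: ap_contract)
  finally show ?thesis .
qed

definition cv :: "'i vec \<Rightarrow> 'i vec \<Rightarrow> 'i vec" where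
  "cv f g = (\<lambda>x. dd x (\<lambda>p q. f p * g q))"
definition ra :: "'i vec \<Rightarrow> 'i vec \<Rightarrow> 'i vec" where
  "ra m h = (\<lambda>x. ap h (\<lambda>b. ss b (\<lambda>s. mm x s m)))"
definition hl :: "'i vec \<Rightarrow> 'i vec \<Rightarrow> 'i vec" where
  "hl h f = (\<lambda>x. ap h (\<lambda>b. mm x b f))"

lemma ra_assoc_bas: "ra (ra m (bas c)) (bas b) x = ra m (hmul M (bas c) (bas b)) x"
proof -
  have "ra (ra m (bas c)) (bas b) x = ss b (\<lambda>s. mm x s (\<lambda>w. ss c (\<lambda>t. mm w t m)))"
    by (simp add: ra_def)
  also have "\<dots> = ss b (\<lambda>s. ss c (\<lambda>t. mm x s (\<lambda>w. mm w t m)))"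
    by (simp only: mm_ss)
  also have "\<dots> = ss b (\<lambda>p. ss c (\<lambda>q. mm p q (\<lambda>s. mm x s m)))"
    by (simp only: assoc)
  also have "\<dots> = mm c b (\<lambda>k. ss k (\<lambda>s. mm x s m))"
    by (rule S_antimult[symmetric])
  also have "\<dots> = ra m (hmul M (bas c) (bas b)) x"
    by (simp add: ra_def hmul_bas)
  finally show ?thesis .
qed

lemma Dprime: "dd x (\<lambda>p q. f p * ss b (\<lambda>s. mm q s m)) = dd b (\<lambda>b1 b2. ss b1 (\<lambda>s. mm x s (\<lambda>y. dd y (\<lambda>p q. mm p b2 f * m q))))"
proof -
  have "dd b (\<lambda>b1 b2. ss b1 (\<lambda>s. mm x s (\<lambda>y. dd y (\<lambda>p q. mm p b2 f * m q))))
      = dd b (\<lambda>b1 b2. ss b1 (\<lambda>s. dd x (\<lambda>x1 x2. dd s (\<lambda>s1 s2. mm x1 s1 (\<lambda>p. mm x2 s2 (\<lambda>q. mm p b2 f * m q))))))"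
    by (simp only: dmult)
  also have "\<dots> = dd x (\<lambda>x1 x2. dd b (\<lambda>b1 b2. ss b1 (\<lambda>s. dd s (\<lambda>s1 s2. mm x1 s1 (\<lambda>p. mm x2 s2 (\<lambda>q. mm p b2 f * m q))))))"
    apply (simp only: ss_dd) apply (subst dd_dd) by (rule refl)
  also have "\<dots> = dd x (\<lambda>x1 x2. dd b (\<lambda>b1 b2. dd b1 (\<lambda>c d. ss d (\<lambda>s1. ss c (\<lambda>s2. mm x1 s1 (\<lambda>p. mm x2 s2 (\<lambda>q. mm p b2 f * m q)))))))"
    by (simp only: S_anticomult)
  also have "\<dots> = dd x (\<lambda>x1 x2. dd b (\<lambda>c t. dd t (\<lambda>d b2. ss d (\<lambda>s1. ss c (\<lambda>s2. mm x1 s1 (\<lambda>p. mm x2 s2 (\<lambda>q. mm p b2 f * m q)))))))"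
    by (simp only: coassoc)
  also have "\<dots> = dd x (\<lambda>x1 x2. dd b (\<lambda>c t. dd t (\<lambda>d b2. ss d (\<lambda>s1. mm s1 b2 (\<lambda>r. mm x1 r f)) * ss c (\<lambda>s2. mm x2 s2 m))))"
    by (simp only: ap_cmult ap_multc assoc)
  also have "\<dots> = dd x (\<lambda>x1 x2. dd b (\<lambda>c t. E t * (f x1 * ss c (\<lambda>s2. mm x2 s2 m))))"
    by (simp only: ap2_multc antL unitR mult.assoc)
  also have "\<dots> = dd x (\<lambda>p q. f p * ss b (\<lambda>s. mm q s m))"
    by (simp only: counitR')
  finally show ?thesis by (rule sym)
qed

definition lint :: "'i vec \<Rightarrow> bool" where
  "lint l \<longleftrightarrow> (\<forall>y G. dd y (\<lambda>p q. G p * l q) = uu G * l y)"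

lemma D_int: assumes "lint l"
  shows "dd x (\<lambda>p q. f p * ss b (\<lambda>s. mm q s l)) = dd b (\<lambda>b1 b2. f b2 * ss b1 (\<lambda>s. mm x s l))"
proof -
  have I: "dd y (\<lambda>p q. G p * l q) = uu G * l y" for y G using assms unfolding lint_def by blast
  show ?thesis unfolding Dprime I unitL by (simp only: ap_cmult)
qed


lemma mm_dd: "mm a b (\<lambda>w. dd c (\<lambda>p q. F p q w)) = dd c (\<lambda>p q. mm a b (\<lambda>w. F p q w))"
  by (rule ap2_ap_swap[symmetric])
lemma sum_dd: "(\<Sum>j\<in>A. dd c (\<lambda>p q. F j p q)) = dd c (\<lambda>p q. \<Sum>j\<in>A. F j p q)"
  by (rule ap2_sum[symmetric])
lemma sum_bas_idx: "(\<Sum>j\<in>(UNIV::'i set). bas j d * F j) = (F d :: complex)"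
  by (simp add: bas_def)

lemma PULL1: "dd w (\<lambda>p q. A p * dd b (\<lambda>b1 b2. B b2 * F b1 q)) = dd b (\<lambda>b1 b2. B b2 * dd w (\<lambda>p q. A p * F b1 q))"
proof -
  have "dd w (\<lambda>p q. A p * dd b (\<lambda>b1 b2. B b2 * F b1 q)) = dd w (\<lambda>p q. dd b (\<lambda>b1 b2. A p * (B b2 * F b1 q)))"
    by (simp only: ap2_cmult)
  also have "\<dots> = dd b (\<lambda>b1 b2. dd w (\<lambda>p q. A p * (B b2 * F b1 q)))"
    by (rule ap2_swap)
  also have "\<dots> = dd b (\<lambda>b1 b2. B b2 * dd w (\<lambda>p q. A p * F b1 q))"
  proof -
    have e: "\<And>p q b1 b2. A p * (B b2 * F b1 q) = B b2 * (A p * F b1 q)" by (simp add: mult_ac)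
    show ?thesis by (simp only: e ap2_cmult)
  qed
  finally show ?thesis .
qed

lemma L6: "ss d (\<lambda>b'. ss b' (\<lambda>s. mm y s (\<lambda>w. ss c (\<lambda>t. mm w t l)))) = ss d (\<lambda>r. mm c r (\<lambda>v. ss v (\<lambda>t. mm y t l)))"
proof -
  have "ss d (\<lambda>b'. ss b' (\<lambda>s. mm y s (\<lambda>w. ss c (\<lambda>t. mm w t l)))) = ss d (\<lambda>b'. ss b' (\<lambda>s. ss c (\<lambda>t. mm y s (\<lambda>w. mm w t l))))"
    by (simp only: mm_ss)
  also have "\<dots> = ss d (\<lambda>b'. ss b' (\<lambda>s. ss c (\<lambda>t. mm s t (\<lambda>w. mm y w l))))"
    by (simp only: assoc)
  also have "\<dots> = ss d (\<lambda>r. mm c r (\<lambda>v. ss v (\<lambda>t. mm y t l)))"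
    by (simp only: S_antimult)
  finally show ?thesis .
qed

lemma I2_bas: assumes "lint l"
  shows "(\<Sum>j\<in>UNIV. ss j (\<lambda>b'. ss b' (\<lambda>s. mm y s (\<lambda>w. dd w (\<lambda>p q. bas j p * dd q (\<lambda>p' q'. bas z p' * ss b (\<lambda>t. mm q' t l)))))))
     = bas z b * l y"
proof -
  have "(\<Sum>j\<in>UNIV. ss j (\<lambda>b'. ss b' (\<lambda>s. mm y s (\<lambda>w. dd w (\<lambda>p q. bas j p * dd q (\<lambda>p' q'. bas z p' * ss b (\<lambda>t. mm q' t l)))))))
     = (\<Sum>j\<in>UNIV. ss j (\<lambda>b'. ss b' (\<lambda>s. mm y s (\<lambda>w. dd b (\<lambda>b1 b2. bas z b2 * dd b1 (\<lambda>c d. bas j d * ss c (\<lambda>t. mm w t l)))))))"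
    by (simp only: D_int[OF assms] PULL1)
  also have "\<dots> = dd b (\<lambda>b1 b2. bas z b2 * dd b1 (\<lambda>c d. ss d (\<lambda>b'. ss b' (\<lambda>s. mm y s (\<lambda>w. ss c (\<lambda>t. mm w t l))))))"
    by (simp only: mm_dd ss_dd sum_dd ap_cmult sum_distrib_left[symmetric] sum_bas_idx)
  also have "\<dots> = dd b (\<lambda>b1 b2. E b1 * (bas z b2 * l y))"
    by (simp only: L6 antR S1 unitR mult.left_commute[of "bas z _"])
  also have "\<dots> = bas z b * l y"
    by (simp only: counitL)
  finally show ?thesis .
qed


lemma I2: assumes "lint l" and "\<And>q. ap h (\<lambda>b. ss b (\<lambda>t. mm q t l)) = 0"
  shows "h z * l y = 0"
proof -
  define T where "T \<Phi> = (\<Sum>j\<in>UNIV. ss j (\<lambda>b'. ss b' (\<lambda>s. mm y s (\<lambda>w. dd w (\<lambda>p q. bas j p * dd q (\<lambda>p' q'. bas z p' * \<Phi> q'))))))" for \<Phi>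
  have "T (\<lambda>q'. ap h (\<lambda>b. ss b (\<lambda>t. mm q' t l))) = (\<Sum>j\<in>UNIV. \<Sum>b\<in>UNIV. h b * ss j (\<lambda>b'. ss b' (\<lambda>s. mm y s (\<lambda>w. dd w (\<lambda>p q. bas j p * dd q (\<lambda>p' q'. bas z p' * ss b (\<lambda>t. mm q' t l)))))))"
  proof -
    have e: "\<And>a b c. (a::complex) * (h b * c) = h b * (a * c)" by (simp add: mult_ac)
    show ?thesis unfolding T_def ap_def[of h] by (simp only: ap_sum ap2_sum ap_cmult ap2_cmult sum_distrib_left e)
  qed
  also have "\<dots> = (\<Sum>b\<in>UNIV. h b * (\<Sum>j\<in>UNIV. ss j (\<lambda>b'. ss b' (\<lambda>s. mm y s (\<lambda>w. dd w (\<lambda>p q. bas j p * dd q (\<lambda>p' q'. bas z p' * ss b (\<lambda>t. mm q' t l))))))))"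
    by (subst sum.swap) (simp only: sum_distrib_left)
  also have "\<dots> = (\<Sum>b\<in>UNIV. h b * (bas z b * l y))"
    by (simp only: I2_bas[OF assms(1)])
  also have "\<dots> = h z * l y"
    by (simp add: bas_def if_distrib[of "\<lambda>x. h _ * x"] cong: if_cong)
  finally have 1: "T (\<lambda>q'. ap h (\<lambda>b. ss b (\<lambda>t. mm q' t l))) = h z * l y" .
  have "T (\<lambda>q'. ap h (\<lambda>b. ss b (\<lambda>t. mm q' t l))) = T (\<lambda>q'. 0)"
    using assms(2) by simp
  also have "\<dots> = 0" unfolding T_def by simp
  finally show ?thesis using 1 by simp
qed

lemma CVA: "dd v (\<lambda>p q. f p * dd q (\<lambda>a b. g a * m b)) = dd v (\<lambda>p q. dd p (\<lambda>a b. f a * g b) * m q)"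
proof -
  have "dd v (\<lambda>p q. dd p (\<lambda>a b. f a * g b) * m q) = dd v (\<lambda>p q. dd p (\<lambda>a b. f a * g b * m q))"
    by (simp only: ap2_multc)
  also have "\<dots> = dd v (\<lambda>p t. dd t (\<lambda>a b. f p * g a * m b))"
    by (rule coassoc)
  also have "\<dots> = dd v (\<lambda>p q. f p * dd q (\<lambda>a b. g a * m b))"
    by (simp only: mult.assoc ap2_cmult)
  finally show ?thesis by (rule sym)
qed

lemma EXP: "dd v (\<lambda>p q. g p * m q) = (\<Sum>p'\<in>UNIV. g p' * dd v (\<lambda>p q. bas p' p * m q))"
  by (simp add: ap2_sep2 ap_def) (simp add: mult.commute)

lemma EXPC: "dd v (\<lambda>p q. C p k j * m q) = (\<Sum>p'\<in>UNIV. C p' k j * dd v (\<lambda>p q. bas p' p * m q))"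
  by (rule EXP)

lemma L7: "ss j (\<lambda>s. mm y s (\<lambda>w. ss k (\<lambda>b. ss b (\<lambda>s'. mm w s' \<Psi>)))) = ss k (\<lambda>r. mm r j (\<lambda>u. ss u (\<lambda>s. mm y s \<Psi>)))"
proof -
  have "ss k (\<lambda>r. mm r j (\<lambda>u. ss u (\<lambda>s. mm y s \<Psi>))) = ss k (\<lambda>r. ss j (\<lambda>p. ss r (\<lambda>q. mm p q (\<lambda>s. mm y s \<Psi>))))"
    by (simp only: S_antimult)
  also have "\<dots> = ss k (\<lambda>r. ss j (\<lambda>p. ss r (\<lambda>q. mm y p (\<lambda>t. mm t q \<Psi>))))"
    by (simp only: assoc[symmetric])
  also have "\<dots> = ss j (\<lambda>p. ss k (\<lambda>r. ss r (\<lambda>q. mm y p (\<lambda>t. mm t q \<Psi>))))"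
    by (rule ap_swap)
  also have "\<dots> = ss j (\<lambda>s. mm y s (\<lambda>w. ss k (\<lambda>b. ss b (\<lambda>s'. mm w s' \<Psi>))))"
    by (simp only: ss_mm)
  finally show ?thesis by (rule sym)
qed

lemma sum_reorder3: "(\<Sum>j\<in>A. \<Sum>k\<in>B. \<Sum>p\<in>D. F j k p) = (\<Sum>p\<in>D. \<Sum>k\<in>B. \<Sum>j\<in>A. (F j k p :: complex))"
proof -
  have "(\<Sum>j\<in>A. \<Sum>k\<in>B. \<Sum>p\<in>D. F j k p) = (\<Sum>j\<in>A. \<Sum>p\<in>D. \<Sum>k\<in>B. F j k p)" by (rule sw23)
  also have "\<dots> = (\<Sum>p\<in>D. \<Sum>j\<in>A. \<Sum>k\<in>B. F j k p)" by (rule sum.swap)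
  also have "\<dots> = (\<Sum>p\<in>D. \<Sum>k\<in>B. \<Sum>j\<in>A. F j k p)" by (rule sw23)
  finally show ?thesis .
qed

lemma claimB: "(\<Sum>j\<in>UNIV. ss j (\<lambda>s. mm y s (\<lambda>w. \<Sum>k\<in>UNIV. ss k (\<lambda>b. ss b (\<lambda>s'. mm w s' (\<lambda>v. dd v (\<lambda>p q. bas k p * dd q (\<lambda>p' q'. bas j p' * m q'))))))))
   = m y"
proof -
  define \<Psi> where "\<Psi> p' v = dd v (\<lambda>p q. bas p' p * m q)" for p' v
  have "(\<Sum>j\<in>UNIV. ss j (\<lambda>s. mm y s (\<lambda>w. \<Sum>k\<in>UNIV. ss k (\<lambda>b. ss b (\<lambda>s'. mm w s' (\<lambda>v. dd v (\<lambda>p q. bas k p * dd q (\<lambda>p' q'. bas j p' * m q'))))))))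
     = (\<Sum>j\<in>UNIV. ss j (\<lambda>s. mm y s (\<lambda>w. \<Sum>k\<in>UNIV. ss k (\<lambda>b. ss b (\<lambda>s'. mm w s' (\<lambda>v. \<Sum>p'\<in>UNIV. C p' k j * \<Psi> p' v))))))"
    unfolding \<Psi>_def by (simp only: CVA ap2_bas2 EXPC)
  also have "\<dots> = (\<Sum>j\<in>UNIV. \<Sum>k\<in>UNIV. \<Sum>p'\<in>UNIV. C p' k j * ss j (\<lambda>s. mm y s (\<lambda>w. ss k (\<lambda>b. ss b (\<lambda>s'. mm w s' (\<Psi> p'))))))"
    by (simp only: ap_sum ap_cmult sum_distrib_left)
  also have "\<dots> = (\<Sum>p'\<in>UNIV. dd p' (\<lambda>k j. ss j (\<lambda>s. mm y s (\<lambda>w. ss k (\<lambda>b. ss b (\<lambda>s'. mm w s' (\<Psi> p')))))))"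
    apply (subst sum_reorder3) by (simp only: ap2_def)
  also have "\<dots> = (\<Sum>p'\<in>UNIV. E p' * \<Psi> p' y)"
    by (simp only: L7 antL S1 unitR)
  also have "\<dots> = m y"
    unfolding \<Psi>_def by (simp only: EXP[of y E m, symmetric] counitL)
  finally show ?thesis .
qed


lemma multc_ap2: "ap2 X F * c = ap2 X (\<lambda>p q. F p q * c)" by simp

lemma KA: "(\<Sum>k\<in>UNIV. dd k (\<lambda>c d. ss c (\<lambda>b2. dd p' (\<lambda>a b. mm a b2 G * bas k b)) * B d)) = uu G * B p'"
proof -
  have "(\<Sum>k\<in>UNIV. dd k (\<lambda>c d. ss c (\<lambda>b2. dd p' (\<lambda>a b. mm a b2 G * bas k b)) * B d))
      = (\<Sum>k\<in>UNIV. dd k (\<lambda>c d. dd p' (\<lambda>a b. ss c (\<lambda>b2. mm a b2 G) * bas k b * B d)))"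
    by (simp only: ss_dd ap_multc multc_ap2)
  also have "\<dots> = (\<Sum>k\<in>UNIV. dd p' (\<lambda>a b. dd k (\<lambda>c d. ss c (\<lambda>b2. mm a b2 G) * bas k b * B d)))"
    by (subst dd_dd) (rule refl)
  also have "\<dots> = (\<Sum>k\<in>UNIV. dd p' (\<lambda>a b. bas k b * dd k (\<lambda>c d. ss c (\<lambda>b2. mm a b2 G) * B d)))"
  proof -
    have e: "\<And>x y z. (x::complex) * bas k b * z = bas k b * (x * z)" for k b by (simp add: mult_ac)
    show ?thesis by (simp only: e ap2_cmult)
  qed
  also have "\<dots> = dd p' (\<lambda>a b. dd b (\<lambda>c d. ss c (\<lambda>b2. mm a b2 G) * B d))"
    by (simp only: sum_dd sum_bas_idx)
  also have "\<dots> = dd p' (\<lambda>t d. dd t (\<lambda>a c. ss c (\<lambda>b2. mm a b2 G) * B d))"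
    by (simp only: coassoc)
  also have "\<dots> = dd p' (\<lambda>t d. E t * (uu G * B d))"
    by (simp only: ap2_multc antR mult.assoc)
  also have "\<dots> = uu G * B p'"
    by (simp only: counitL)
  finally show ?thesis .
qed

definition PP :: "'i vec \<Rightarrow> 'i vec" where
  "PP m = (\<lambda>w. \<Sum>k\<in>UNIV. ss k (\<lambda>b. ss b (\<lambda>s. mm w s (\<lambda>v. dd v (\<lambda>p q. bas k p * m q)))))"

lemma dd_G_ss: "dd y (\<lambda>p q. G p * ss k (\<lambda>b. F b q)) = ss k (\<lambda>b. dd y (\<lambda>p q. G p * F b q))"
proof -
  have "dd y (\<lambda>p q. G p * ss k (\<lambda>b. F b q)) = dd y (\<lambda>p q. ss k (\<lambda>b. G p * F b q))" by simp
  also have "\<dots> = ss k (\<lambda>b. dd y (\<lambda>p q. G p * F b q))" by (rule ap2_ap_swap)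
  finally show ?thesis .
qed

lemma EXPD: "dd v (\<lambda>p q. dd p (\<lambda>a b. F a * bas k b) * m q) = (\<Sum>p'\<in>UNIV. dd p' (\<lambda>a b. F a * bas k b) * dd v (\<lambda>p q. bas p' p * m q))"
  by (rule EXP)

lemma claimA: "dd y (\<lambda>p q. G p * PP m q) = uu G * PP m y"
proof -
  define \<Psi> where "\<Psi> p' v = dd v (\<lambda>p q. bas p' p * m q)" for p' v
  have "dd y (\<lambda>p q. G p * PP m q) = (\<Sum>k\<in>UNIV. dd y (\<lambda>p q. G p * ss k (\<lambda>b. ss b (\<lambda>s. mm q s (\<Psi> k)))))"
    unfolding PP_def \<Psi>_def by (simp only: sum_distrib_left ap2_sum)
  also have "\<dots> = (\<Sum>k\<in>UNIV. ss k (\<lambda>b. dd y (\<lambda>p q. G p * ss b (\<lambda>s. mm q s (\<Psi> k)))))"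
    apply (rule sum.cong[OF refl]) apply (subst dd_G_ss) by (rule refl)
  also have "\<dots> = (\<Sum>k\<in>UNIV. dd k (\<lambda>c d. ss d (\<lambda>b1. ss c (\<lambda>b2. ss b1 (\<lambda>s. mm y s (\<lambda>v. dd v (\<lambda>p q. mm p b2 G * \<Psi> k q)))))))"
    by (simp only: Dprime S_anticomult)
  also have "\<dots> = (\<Sum>k\<in>UNIV. dd k (\<lambda>c d. ss d (\<lambda>b1. ss c (\<lambda>b2. ss b1 (\<lambda>s. mm y s (\<lambda>v. \<Sum>p'\<in>UNIV. dd p' (\<lambda>a b. mm a b2 G * bas k b) * \<Psi> p' v))))))"
    unfolding \<Psi>_def by (simp only: CVA EXPD)
  also have "\<dots> = (\<Sum>k\<in>UNIV. dd k (\<lambda>c d. \<Sum>p'\<in>UNIV. ss c (\<lambda>b2. dd p' (\<lambda>a b. mm a b2 G * bas k b)) * ss d (\<lambda>b1. ss b1 (\<lambda>s. mm y s (\<Psi> p')))))"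
    by (simp only: ap_sum ap_cmult ap_multc)
  also have "\<dots> = (\<Sum>p'\<in>UNIV. \<Sum>k\<in>UNIV. dd k (\<lambda>c d. ss c (\<lambda>b2. dd p' (\<lambda>a b. mm a b2 G * bas k b)) * ss d (\<lambda>b1. ss b1 (\<lambda>s. mm y s (\<Psi> p')))))"
    apply (simp only: ap2_sum) by (rule sum.swap)
  also have "\<dots> = (\<Sum>p'\<in>UNIV. uu G * ss p' (\<lambda>b1. ss b1 (\<lambda>s. mm y s (\<Psi> p'))))"
    by (simp only: KA)
  also have "\<dots> = uu G * PP m y"
    unfolding PP_def \<Psi>_def by (simp only: sum_distrib_left)
  finally show ?thesis .
qed

end


lemma lin_surj:
  fixes A :: "'i::finite \<Rightarrow> 'i \<Rightarrow> complex"
  assumes inj0: "\<And>h. lin A h = (\<lambda>_. 0) \<Longrightarrow> h = (\<lambda>_. 0)"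
  shows "surj (lin A)"
proof -
  define f :: "complex^'i \<Rightarrow> complex^'i" where "f v = (\<chi> j. \<Sum>i\<in>UNIV. v$i * A i j)" for v
  have lf: "Vector_Spaces.linear (*s) (*s) f"
    by (unfold_locales) (simp_all add: f_def vec_eq_iff sum.distrib sum_distrib_left distrib_right mult.assoc)
  have inj: "inj f"
  proof (rule injI)
    fix v w assume "f v = f w"
    hence "lin A (\<lambda>i. v$i - w$i) = (\<lambda>_. 0)"
      by (auto simp: f_def vec_eq_iff lin_def left_diff_distrib sum_subtractf)
    hence "(\<lambda>i. v$i - w$i) = (\<lambda>_. 0)" by (rule inj0)
    thus "v = w" by (simp add: vec_eq_iff fun_eq_iff)
  qed
  have "surj f" by (rule vec.linear_inj_imp_surj[OF lf inj])
  show ?thesis unfolding surj_def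
  proof
    fix y :: "'i \<Rightarrow> complex"
    obtain v where "f v = vec_lambda y" using \<open>surj f\<close> by (metis surjD)
    hence "lin A (\<lambda>i. v$i) = y" by (auto simp: f_def vec_eq_iff lin_def)
    thus "\<exists>x. y = lin A x" by metis
  qed
qed

context hopf begin

lemma exists_integral: "\<exists>l y. lint l \<and> l y \<noteq> 0"
proof (rule ccontr)
  assume "\<not> ?thesis"
  hence Z: "\<And>l y. lint l \<Longrightarrow> l y = 0" by blast
  have A: "lint (PP m)" for m unfolding lint_def using claimA by blast
  have P0: "PP m = (\<lambda>_. 0)" for m using Z[OF A] by blast
  have "E y = (\<Sum>j\<in>UNIV. ss j (\<lambda>s. mm y s (PP (\<lambda>q. dd q (\<lambda>p' q'. bas j p' * E q')))))" for y
    unfolding PP_def using claimB[of y E] by simp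
  hence "E y = 0" for y unfolding P0 by simp
  hence "uu E = 0" by (simp add: ap_def)
  thus False using eU by simp
qed

lemma ap_linS: "ap h (\<lambda>b. ss b G) = ap (lin S h) G"
  unfolding ap_contract by (rule ap_ext) (simp add: lin_ap)

lemma S_inj0: assumes "lin S h = (\<lambda>_. 0)" shows "h = (\<lambda>_. 0)"
proof -
  obtain l y where l: "lint l" "l y \<noteq> 0" using exists_integral by blast
  have "ap h (\<lambda>b. ss b (\<lambda>t. mm q t l)) = 0" for q
    unfolding ap_linS assms by (simp add: ap_def)
  hence "h z * l y = 0" for z by (rule I2[OF l(1)])
  thus ?thesis using l(2) by auto
qed

lemma lin_linear: "lin A (\<lambda>i. a * x i + b * y i) = (\<lambda>j. a * lin A x j + b * lin A y j)"
  by (simp add: lin_def sum.distrib sum_distrib_left distrib_right mult.assoc)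

lemma S_inj: "inj (lin S)"
proof (rule injI)
  fix x y assume "lin S x = lin S y"
  hence "lin S (\<lambda>i. 1 * x i + (-1) * y i) = (\<lambda>_. 0)"
    unfolding lin_linear by simp
  hence "(\<lambda>i. 1 * x i + (-1) * y i) = (\<lambda>_. 0)" by (rule S_inj0)
  thus "x = y" by (auto simp: fun_eq_iff)
qed

lemma S_surj: "surj (lin S)"
  by (rule lin_surj) (use S_inj0 in blast)

lemma S_bij: "bij (lin S)" using S_inj S_surj by (simp add: bij_def)

lemma Sinv_S[simp]: "Sinv S (lin S x) = x"
  unfolding Sinv_def using S_inj by (simp add: inv_f_f)
lemma S_Sinv[simp]: "lin S (Sinv S y) = y"
  unfolding Sinv_def using S_surj by (simp add: surj_f_inv_f)


definition Sv :: "'i \<Rightarrow> 'i vec" where "Sv k = Sinv S (bas k)"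
abbreviation "tt k G \<equiv> ap (Sv k) G"

lemma bas_sym: "bas k j = bas j k" by (simp add: bas_def)

lemma Sinv_lin: "Sinv S y = (\<lambda>l. ap y (\<lambda>k. Sv k l))"
proof -
  have "lin S (\<lambda>l. ap y (\<lambda>k. Sv k l)) = y"
  proof
    fix j
    have "lin S (\<lambda>l. ap y (\<lambda>k. Sv k l)) j = ap y (\<lambda>k. ap (Sv k) (\<lambda>i. S i j))"
      by (simp add: lin_ap ap_contract)
    also have "\<dots> = ap y (\<lambda>k. lin S (Sv k) j)" by (simp add: lin_ap)
    also have "\<dots> = ap y (\<lambda>k. bas j k)" by (simp add: Sv_def bas_sym)
    also have "\<dots> = y j" by simp
    finally show "lin S (\<lambda>l. ap y (\<lambda>k. Sv k l)) j = y j" .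
  qed
  hence "Sinv S (lin S (\<lambda>l. ap y (\<lambda>k. Sv k l))) = Sinv S y" by simp
  thus ?thesis by simp
qed

lemma ap_Sinv: "ap (Sinv S y) G = ap y (\<lambda>k. tt k G)"
  unfolding Sinv_lin by (simp add: ap_contract)

lemma T1: "ss p (\<lambda>y. tt y G) = G p"
proof -
  have "ss p (\<lambda>y. tt y G) = ap (Sinv S (S p)) G" by (simp add: ap_Sinv)
  also have "\<dots> = ap (Sinv S (lin S (bas p))) G" by (simp add: lin_bas)
  also have "\<dots> = G p" by simp
  finally show ?thesis .
qed

lemma T2: "tt k (\<lambda>y. ss y G) = G k"
proof -
  have "tt k (\<lambda>y. ss y G) = ap (lin S (Sv k)) G" by (rule ap_linS)
  also have "\<dots> = G k" by (simp add: Sv_def)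
  finally show ?thesis .
qed

lemma T3: "tt k E = E k"
proof -
  have "tt k E = tt k (\<lambda>y. ss y E)" by (simp only: eS)
  thus ?thesis by (simp only: T2)
qed

lemma T4: "uu (\<lambda>k. tt k G) = uu G"
proof -
  have "uu G = uu (\<lambda>p. ss p (\<lambda>y. tt y G))" by (simp only: T1)
  also have "\<dots> = uu (\<lambda>y. tt y G)" by (rule S1)
  finally show ?thesis by simp
qed

definition chr :: "'i vec \<Rightarrow> bool" where
  "chr \<beta> \<longleftrightarrow> (\<forall>p q. mm p q \<beta> = \<beta> p * \<beta> q) \<and> uu \<beta> = 1"

lemma T5: assumes "chr \<beta>" shows "dd h (\<lambda>i k. \<beta> i * tt k \<beta>) = E h"
proof -
  have mb: "mm p q \<beta> = \<beta> p * \<beta> q" for p q using assms unfolding chr_def by blast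
  have ub: "uu \<beta> = 1" using assms unfolding chr_def by blast
  have "dd h (\<lambda>i k. \<beta> i * tt k \<beta>) = tt h (\<lambda>y. ss y (\<lambda>a. dd a (\<lambda>i k. \<beta> i * tt k \<beta>)))"
    by (simp only: T2)
  also have "\<dots> = tt h (\<lambda>y. dd y (\<lambda>p q. ss q (\<lambda>x. ss p (\<lambda>y'. \<beta> x * tt y' \<beta>))))"
    by (simp only: S_anticomult)
  also have "\<dots> = tt h (\<lambda>y. dd y (\<lambda>p q. ss q (\<lambda>r. mm p r \<beta>)))"
  proof -
    have e: "\<And>p q. ss q (\<lambda>r. mm p r \<beta>) = ss q \<beta> * \<beta> p" by (simp add: mb mult.commute)
    show ?thesis by (simp only: ap_cmult T1 ap_multc e)
  qed
  also have "\<dots> = tt h E" by (simp only: antR ub mult_1_right)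
  also have "\<dots> = E h" by (rule T3)
  finally show ?thesis .
qed


definition gl :: "'i vec \<Rightarrow> bool" where
  "gl k0 \<longleftrightarrow> (\<forall>p q. ap k0 (\<lambda>k. C k p q) = k0 p * k0 q) \<and> ap k0 E = 1"

lemma gl_dd: assumes "gl k0" shows "ap k0 (\<lambda>k. dd k F) = ap k0 (\<lambda>p. ap k0 (\<lambda>q. F p q))"
proof -
  have c: "ap k0 (\<lambda>k. C k p q) = k0 p * k0 q" for p q using assms unfolding gl_def by blast
  have "ap k0 (\<lambda>k. dd k F) = ap2 (\<lambda>p q. ap k0 (\<lambda>k. C k p q)) F" by (rule ap_ap2_contract)
  also have "\<dots> = ap2 (\<lambda>p q. k0 p * k0 q) F" by (simp only: c)
  also have "\<dots> = ap k0 (\<lambda>p. ap k0 (\<lambda>q. F p q))" by (simp only: ap2_def ap_def sum_distrib_left mult.assoc)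
  finally show ?thesis .
qed

lemma vec_eq_ap: "(\<And>j. ap v (bas j) = ap w (bas j)) \<Longrightarrow> v = w"
  by (rule ext) simp

lemma ap_swap_in: "ap x (\<lambda>i. ss (f i) (\<lambda>p. ap y (\<lambda>j. F i p j))) = ap x (\<lambda>i. ap y (\<lambda>j. ss (f i) (\<lambda>p. F i p j)))"
  by (rule arg_cong[where f="ap x"], rule ext, rule ap_swap)

lemma SAv: "lin S (hmul M x y) = hmul M (lin S y) (lin S x)"
proof (rule vec_eq_ap)
  fix j
  have "ap (lin S (hmul M x y)) (bas j) = ap (hmul M x y) (\<lambda>k. ss k (bas j))" by (simp only: ap_linS)
  also have "\<dots> = ap x (\<lambda>a. ap y (\<lambda>b. ss b (\<lambda>p. ss a (\<lambda>q. mm p q (bas j)))))" by (simp only: ap_hmul S_antimult)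
  also have "\<dots> = ap y (\<lambda>b. ap x (\<lambda>a. ss b (\<lambda>p. ss a (\<lambda>q. mm p q (bas j)))))" by (rule ap_swap)
  also have "\<dots> = ap y (\<lambda>b. ss b (\<lambda>p. ap x (\<lambda>a. ss a (\<lambda>q. mm p q (bas j)))))"
    by (rule arg_cong[where f="ap y"], rule ext, rule ap_swap)
  also have "\<dots> = ap (hmul M (lin S y) (lin S x)) (bas j)" by (simp only: ap_hmul ap_linS)
  finally show "ap (lin S (hmul M x y)) (bas j) = ap (hmul M (lin S y) (lin S x)) (bas j)" .
qed

lemma S1v: "lin S U = U"
proof (rule vec_eq_ap)
  fix j show "ap (lin S U) (bas j) = ap U (bas j)" by (simp only: ap_linS[symmetric] S1)
qed

lemma gl_anti1: assumes "gl k0" shows "hmul M (lin S k0) k0 = U"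
proof (rule vec_eq_ap)
  fix l
  have e: "ap k0 E = 1" using assms unfolding gl_def by blast
  have "ap (hmul M (lin S k0) k0) (bas l) = ap k0 (\<lambda>i. ss i (\<lambda>p. ap k0 (\<lambda>j. mm p j (bas l))))"
    by (simp only: ap_hmul ap_linS)
  also have "\<dots> = ap k0 (\<lambda>i. ap k0 (\<lambda>j. ss i (\<lambda>p. mm p j (bas l))))" by (rule ap_swap_in)
  also have "\<dots> = ap k0 (\<lambda>k. dd k (\<lambda>i j. ss i (\<lambda>p. mm p j (bas l))))" by (simp only: gl_dd[OF assms])
  also have "\<dots> = ap U (bas l)" by (simp only: antL ap_multc e mult_1_left)
  finally show "ap (hmul M (lin S k0) k0) (bas l) = ap U (bas l)" .
qed

lemma gl_anti2: assumes "gl k0" shows "hmul M k0 (lin S k0) = U"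
proof (rule vec_eq_ap)
  fix l
  have e: "ap k0 E = 1" using assms unfolding gl_def by blast
  have "ap (hmul M k0 (lin S k0)) (bas l) = ap k0 (\<lambda>i. ap k0 (\<lambda>j. ss j (\<lambda>p. mm i p (bas l))))"
    by (simp only: ap_hmul ap_linS)
  also have "\<dots> = ap k0 (\<lambda>k. dd k (\<lambda>i j. ss j (\<lambda>p. mm i p (bas l))))" by (simp only: gl_dd[OF assms])
  also have "\<dots> = ap U (bas l)" by (simp only: antR ap_multc e mult_1_left)
  finally show "ap (hmul M k0 (lin S k0)) (bas l) = ap U (bas l)" .
qed

lemma T6: assumes "gl k0" shows "hmul M (Sinv S k0) k0 = U"
proof -
  define k1 where "k1 = lin S k0"
  have a1: "hmul M k1 k0 = U" unfolding k1_def by (rule gl_anti1[OF assms])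
  have a2: "hmul M k0 k1 = U" unfolding k1_def by (rule gl_anti2[OF assms])
  have b: "hmul M (lin S k1) k1 = U" using arg_cong[OF a2, of "lin S"] by (simp add: SAv S1v k1_def)
  have "lin S k1 = hmul M (lin S k1) (hmul M k1 k0)" by (simp add: a1 ax_unitR)
  also have "\<dots> = hmul M (hmul M (lin S k1) k1) k0" by (simp add: ax_assoc)
  also have "\<dots> = k0" by (simp add: b ax_unitL)
  finally have "lin S k1 = k0" .
  hence "Sinv S k0 = k1" by (metis Sinv_S)
  thus ?thesis using a1 by simp
qed

end

lemma sum_rot3: "(\<Sum>a\<in>A. \<Sum>b\<in>B. \<Sum>c\<in>D. f a b c) = (\<Sum>c\<in>D. \<Sum>a\<in>A. \<Sum>b\<in>B. (f a b c::complex))"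
proof -
  have "(\<Sum>a\<in>A. \<Sum>b\<in>B. \<Sum>c\<in>D. f a b c) = (\<Sum>a\<in>A. \<Sum>c\<in>D. \<Sum>b\<in>B. f a b c)" by (rule sw23)
  also have "\<dots> = (\<Sum>c\<in>D. \<Sum>a\<in>A. \<Sum>b\<in>B. f a b c)" by (rule sum.swap)
  finally show ?thesis .
qed

context hopf begin

lemma dmul_cps: "dmul M C S X Y (x,z) = ap2 (\<lambda>a b. X (a,b)) (\<lambda>a b. ap2 (\<lambda>c d. Y (c,d))
   (\<lambda>c d. dd b (\<lambda>i t. dd t (\<lambda>j k. ap (C x a) (\<lambda>q. tt k (\<lambda>r. mm r q (\<lambda>s. M s i c))) * M j d z))))"
proof -
  have conv: "conv C (bas a) g x = ap (C x a) g" for a g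
  proof -
    have e: "\<And>p q. C x p q * bas a p * g q = bas a p * (C x p q * g q)" by (simp add: mult_ac)
    show ?thesis unfolding conv_def ap_def by (simp only: e sum_distrib_left[symmetric] sum_bas_left)
  qed
  have hit: "hit M (bas i) (bas c) (Sinv S (bas k)) = (\<lambda>q. tt k (\<lambda>r. mm r q (\<lambda>s. M s i c)))" for i c k
    by (rule ext) (simp add: hit_def pair_ap hmul_ap ap_hmul Sv_def)
  have hm: "hmul M (bas j) (bas d) z = M j d z" for j d by (simp add: hmul_bas)
  have dd2: "(\<Sum>i\<in>UNIV. \<Sum>j\<in>UNIV. \<Sum>k\<in>UNIV. (\<Sum>t\<in>UNIV. C b i t * C t j k) * F i j k) = dd b (\<lambda>i t. dd t (\<lambda>j k. F i j k))" for b F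
  proof -
    have "(\<Sum>i\<in>UNIV. \<Sum>j\<in>UNIV. \<Sum>k\<in>UNIV. (\<Sum>t\<in>UNIV. C b i t * C t j k) * F i j k)
        = (\<Sum>i\<in>UNIV. \<Sum>j\<in>UNIV. \<Sum>k\<in>UNIV. \<Sum>t\<in>UNIV. C b i t * (C t j k * F i j k))"
      by (simp add: sum_distrib_right mult.assoc)
    also have "\<dots> = (\<Sum>i\<in>UNIV. \<Sum>t\<in>UNIV. \<Sum>j\<in>UNIV. \<Sum>k\<in>UNIV. C b i t * (C t j k * F i j k))"
      by (rule sum.cong[OF refl], rule sum_rot3)
    also have "\<dots> = dd b (\<lambda>i t. dd t (\<lambda>j k. F i j k))"
      by (simp only: ap2_def sum_distrib_left)
    finally show ?thesis .
  qed
  show ?thesis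
    unfolding dmul_def
    apply (simp only: tens_def case_prod_conv conv hit hm dd2)
    by (simp only: ap2_def sum_distrib_left mult.assoc)
qed


lemma V2: "ap (\<lambda>z. ap y (\<lambda>a. G a z)) F = ap y (\<lambda>a. ap (\<lambda>z. G a z) F)"
  by (simp add: ap_contract)
lemma V1: "ap (\<lambda>z. ap2 Y (\<lambda>a b. G a b z)) F = ap2 Y (\<lambda>a b. ap (\<lambda>z. G a b z) F)"
  unfolding ap2_as_ap by (rule V2)
lemma V3a: "ap (\<lambda>z. c * G z) F = c * ap G F" unfolding ap_def sum_distrib_left by (simp add: mult_ac)
lemma V3b: "ap (\<lambda>z. G z * c) F = ap G F * c" unfolding ap_def sum_distrib_right by (simp add: mult_ac)

lemma cu1: "dd t (\<lambda>j k. F k * (E j * c)) = F t * c"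
proof -
  have "dd t (\<lambda>j k. F k * (E j * c)) = dd t (\<lambda>j k. E j * (F k * c))" by (simp only: mult_ac)
  thus ?thesis by (simp only: counitL)
qed

lemma multc_ap: "ap x F * c = ap x (\<lambda>k. F k * c)" by simp
lemma YS1: "ap2 (\<lambda>c d. Y (c,d)) (\<lambda>c d. ap2 Z (\<lambda>i t. F c d i t)) = ap2 Z (\<lambda>i t. ap2 (\<lambda>c d. Y (c,d)) (\<lambda>c d. F c d i t))"
  by (rule ap2_swap)
lemma YS2: "ap2 (\<lambda>c d. Y (c,d)) (\<lambda>c d. ap z (\<lambda>q. F c d q)) = ap z (\<lambda>q. ap2 (\<lambda>c d. Y (c,d)) (\<lambda>c d. F c d q))"
  by (rule ap2_ap_swap)

definition Phi :: "('i \<times> 'i \<Rightarrow> complex) \<Rightarrow> 'i vec" where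
  "Phi W = (\<lambda>x. ap (\<lambda>b. W (x,b)) E)"

lemma YS3: "ap2 Y2 (\<lambda>c d. G c * E d) = ap (\<lambda>c. ap (Y2 c) E) G"
  unfolding ap2_def ap_def sum_distrib_right by (simp add: mult_ac)

lemma Phi_dmul: "Phi (dmul M C S X Y) x = ap2 (\<lambda>a b. X (a,b)) (\<lambda>a b. dd b (\<lambda>i t. ap (C x a) (\<lambda>q. tt t (\<lambda>r. mm r q (\<lambda>s. mm s i (Phi Y))))))"
proof -
  have "Phi (dmul M C S X Y) x = ap2 (\<lambda>a b. X (a,b)) (\<lambda>a b. ap2 (\<lambda>c d. Y (c,d))
   (\<lambda>c d. dd b (\<lambda>i t. dd t (\<lambda>j k. ap (C x a) (\<lambda>q. tt k (\<lambda>r. mm r q (\<lambda>s. M s i c))) * (E j * E d)))))"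
    unfolding Phi_def dmul_cps by (simp only: V1 V2 V3a V3b emult)
  also have "\<dots> = ap2 (\<lambda>a b. X (a,b)) (\<lambda>a b. ap2 (\<lambda>c d. Y (c,d))
   (\<lambda>c d. dd b (\<lambda>i t. ap (C x a) (\<lambda>q. tt t (\<lambda>r. mm r q (\<lambda>s. M s i c))) * E d)))"
    by (simp only: cu1)
  also have "\<dots> = ap2 (\<lambda>a b. X (a,b)) (\<lambda>a b. dd b (\<lambda>i t. ap (C x a) (\<lambda>q. tt t (\<lambda>r. mm r q (\<lambda>s. mm s i (Phi Y))))))"
  proof -
    define Y2 where "Y2 = (\<lambda>c d. Y (c,d))"
    have P: "Phi Y = (\<lambda>c. ap (Y2 c) E)" unfolding Phi_def Y2_def ..
    show ?thesis unfolding P Y2_def[symmetric]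
      by (simp only: multc_ap ap2_swap[of Y2] ap2_ap_swap[of Y2] YS3[of Y2] ap_comm[of "\<lambda>c. ap (Y2 c) E"])
  qed
  finally show ?thesis .
qed


definition Psi :: "('i \<times> 'i \<Rightarrow> complex) \<Rightarrow> 'i vec" where
  "Psi W = (\<lambda>z. ap (\<lambda>a. W (a,z)) U)"

definition rt :: "'i \<Rightarrow> ('i \<times> 'i \<Rightarrow> complex) \<Rightarrow> 'i \<Rightarrow> complex" where
  "rt b Z z = ap2 (\<lambda>c d. Z (c,d)) (\<lambda>c d. dd b (\<lambda>i t. dd t (\<lambda>j k. tt k (\<lambda>r. M r i c) * M j d z)))"

lemma PU: "ap (\<lambda>x. ap (C x a) G) U = U a * uu G"
proof -
  have "ap (\<lambda>x. ap (C x a) G) U = uu (\<lambda>x. dd x (\<lambda>p q. bas a p * G q))"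
    by (simp add: ap_comm[of _ U] ap2_sep2)
  also have "\<dots> = U a * uu G" by (simp only: dU ap_cmult) simp
  finally show ?thesis .
qed

lemma Psi_dmul: "Psi (dmul M C S Y Z) z = ap (Psi Y) (\<lambda>b. rt b Z z)"
proof -
  define Y2 where "Y2 = (\<lambda>a b. Y (a,b))"
  have "Psi (dmul M C S Y Z) z = ap2 Y2 (\<lambda>a b. ap2 (\<lambda>c d. Z (c,d))
   (\<lambda>c d. dd b (\<lambda>i t. dd t (\<lambda>j k. U a * uu (\<lambda>q. tt k (\<lambda>r. mm r q (\<lambda>s. M s i c))) * M j d z))))"
    unfolding Psi_def dmul_cps Y2_def by (simp only: V1 V2 V3b PU)
  also have "\<dots> = ap2 Y2 (\<lambda>a b. U a * rt b Z z)"
  proof -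
    have e: "\<And>a b c d. U a * b * c = U a * (b * c)" by (simp add: mult_ac)
    show ?thesis unfolding rt_def by (simp only: ap_swap[of U "Sv _"] unitR e ap2_cmult)
  qed
  also have "\<dots> = ap (Psi Y) (\<lambda>b. rt b Z z)"
    unfolding ap2_sep1 Psi_def Y2_def ..
  finally show ?thesis .
qed

lemma T6cps: assumes "gl k0" shows "ap k0 (\<lambda>i. ap k0 (\<lambda>k. tt k (\<lambda>r. M r i c))) = U c"
proof -
  have "ap k0 (\<lambda>i. ap k0 (\<lambda>k. tt k (\<lambda>r. M r i c))) = ap k0 (\<lambda>k. ap k0 (\<lambda>i. tt k (\<lambda>r. M r i c)))"
    by (rule ap_swap)
  also have "\<dots> = ap k0 (\<lambda>k. tt k (\<lambda>r. ap k0 (\<lambda>i. M r i c)))"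
    by (rule arg_cong[where f="ap k0"], rule ext, rule ap_swap)
  also have "\<dots> = ap (Sinv S k0) (\<lambda>r. ap k0 (\<lambda>i. M r i c))" by (simp only: ap_Sinv)
  also have "\<dots> = hmul M (Sinv S k0) k0 c" by (simp only: hmul_ap)
  also have "\<dots> = U c" by (simp only: T6[OF assms])
  finally show ?thesis .
qed

lemma rt_gl: assumes "gl k0" shows "ap k0 (\<lambda>b. rt b Z z) = hmul M k0 (Psi Z) z"
proof -
  define Z2 where "Z2 = (\<lambda>c d. Z (c,d))"
  have "ap k0 (\<lambda>b. rt b Z z) = ap2 Z2 (\<lambda>c d. ap k0 (\<lambda>i. ap k0 (\<lambda>j. ap k0 (\<lambda>k. tt k (\<lambda>r. M r i c) * M j d z))))"
    unfolding rt_def Z2_def[symmetric] by (simp only: ap2_ap_swap[symmetric] gl_dd[OF assms])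
  also have "\<dots> = ap2 Z2 (\<lambda>c d. U c * ap k0 (\<lambda>j. M j d z))"
    by (simp only: ap_multc ap_cmult T6cps[OF assms])
  also have "\<dots> = ap (Psi Z) (\<lambda>d. ap k0 (\<lambda>j. M j d z))"
    unfolding ap2_sep1 Psi_def Z2_def ..
  also have "\<dots> = hmul M k0 (Psi Z) z"
    unfolding hmul_ap by (rule ap_swap)
  finally show ?thesis .
qed

end


definition bp :: "nat \<Rightarrow> complex poly" where
  "bp j = smult (1 / fact j) (\<Prod>i=0..<j. [:- of_nat i, 1:])"

lemma poly_bp: "poly (bp j) (of_nat k) = of_nat (k choose j)"
  by (simp add: bp_def poly_prod binomial_gbinomial gbinomial_prod_rev divide_inverse mult.commute)

lemma poly_zero_nat: assumes "\<And>k::nat. poly p (of_nat k :: complex) = 0" shows "p = 0"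
proof (rule ccontr)
  assume "p \<noteq> 0"
  hence "finite {x. poly p x = 0}" by (rule poly_roots_finite)
  moreover have "range (of_nat :: nat \<Rightarrow> complex) \<subseteq> {x. poly p x = 0}" using assms by auto
  ultimately have "finite (range (of_nat :: nat \<Rightarrow> complex))" by (rule finite_subset[rotated])
  moreover have "inj (of_nat :: nat \<Rightarrow> complex)" by (rule injI) simp
  ultimately have "finite (UNIV :: nat set)" using finite_imageD by blast
  thus False by simp
qed

lemma poly_square_const:
  fixes P :: "'a \<Rightarrow> complex poly"
  assumes sq: "\<And>x. \<exists>x'. P x' = (P x)^2" and bd: "\<And>x. degree (P x) \<le> N"
  shows "degree (P x) = 0"
proof -
  define D where "D = Max {d. \<exists>x. d = degree (P x)}"
  have fin: "finite {d. \<exists>x. d = degree (P x)}"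
    by (rule finite_subset[of _ "{0..N}"]) (auto simp: bd)
  have le: "degree (P y) \<le> D" for y unfolding D_def by (rule Max_ge[OF fin]) blast
  have "D \<in> {d. \<exists>x. d = degree (P x)}" unfolding D_def by (rule Max_in[OF fin]) blast
  then obtain x0 where x0: "degree (P x0) = D" by auto
  obtain x' where x': "P x' = (P x0)^2" using sq by blast
  have "D = 0"
  proof (cases "P x0 = 0")
    case True thus ?thesis using x0 by simp
  next
    case False
    have "degree (P x') = 2 * D" using x' x0 False by (simp add: degree_power_eq)
    thus ?thesis using le[of x'] by simp
  qed
  thus ?thesis using le[of x] by simp
qed

lemma binom_poly_const:
  fixes F :: "'a \<Rightarrow> nat \<Rightarrow> complex" and c :: "'a \<Rightarrow> nat \<Rightarrow> complex"
  assumes rep: "\<And>x k. F x k = (\<Sum>j<n. of_nat (k choose j) * c x j)"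
    and sq: "\<And>x. \<exists>x'. \<forall>k. F x' k = (F x k)^2"
  shows "F x k = F x 0"
proof -
  define P where "P x = (\<Sum>j<n. smult (c x j) (bp j))" for x
  have FP: "F x k = poly (P x) (of_nat k)" for x k
    by (simp add: rep P_def poly_sum poly_bp mult.commute)
  have sqP: "\<exists>x'. P x' = (P x)^2" for x
  proof -
    obtain x' where "\<forall>k. F x' k = (F x k)^2" using sq by blast
    hence "poly (P x' - (P x)^2) (of_nat k) = 0" for k by (simp add: FP)
    hence "P x' - (P x)^2 = 0" by (rule poly_zero_nat)
    thus ?thesis by auto
  qed
  have bd: "degree (P x) \<le> (\<Sum>j<n. degree (bp j))" for x
    unfolding P_def
  proof (rule degree_sum_le)
    fix j assume "j \<in> {..<n}"
    hence "degree (bp j) \<le> (\<Sum>j<n. degree (bp j))" by (intro member_le_sum) auto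
    thus "degree (smult (c x j) (bp j)) \<le> (\<Sum>j<n. degree (bp j))"
      using degree_smult_le order_trans by blast
  qed simp
  have "degree (P x) = 0" by (rule poly_square_const[OF sqP bd])
  then obtain a where "P x = [:a:]" by (metis degree_eq_zeroE)
  thus ?thesis by (simp add: FP)
qed


context hopf begin

definition RPhi :: "('i \<times> 'i \<Rightarrow> complex) \<Rightarrow> 'i vec \<Rightarrow> 'i vec" where
  "RPhi A v = (\<lambda>x. ap2 (\<lambda>a b. A (a,b)) (\<lambda>a b. dd b (\<lambda>i t. ap (C x a) (\<lambda>q. tt t (\<lambda>r. mm r q (\<lambda>s. mm s i v))))))"

lemma Phi_dmul': "Phi (dmul M C S X Y) = RPhi X (Phi Y)"
  by (rule ext) (simp only: Phi_dmul RPhi_def)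

lemma conv_cps: "conv C f g x = dd x (\<lambda>p q. f p * g q)"
  by (simp add: conv_def ap2_def mult.assoc)

lemma RPhi_char: assumes "chr \<beta>" shows "RPhi A \<beta> x = conv C (Phi A) \<beta> x"
proof -
  have mb: "mm p q \<beta> = \<beta> p * \<beta> q" for p q using assms unfolding chr_def by blast
  have e: "\<And>t q i. tt t \<beta> * \<beta> q * \<beta> i = \<beta> q * (\<beta> i * tt t \<beta>)" by (simp add: mult_ac)
  have "RPhi A \<beta> x = ap2 (\<lambda>a b. A (a,b)) (\<lambda>a b. dd b (\<lambda>i t. ap (C x a) (\<lambda>q. \<beta> q * (\<beta> i * tt t \<beta>))))"
    unfolding RPhi_def by (simp only: mb ap_multc e)
  also have "\<dots> = ap2 (\<lambda>a b. A (a,b)) (\<lambda>a b. ap (C x a) \<beta> * E b)"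
    by (simp only: ap_multc ap2_multc T5[OF assms] mult.commute[of "ap (C x _) \<beta>"])
  also have "\<dots> = conv C (Phi A) \<beta> x"
    unfolding conv_cps Phi_def ap2_def ap_def sum_distrib_right sum_distrib_left
    apply (rule sum.cong[OF refl]) apply (subst sum.swap) by (simp add: mult_ac)
  finally show ?thesis .
qed


lemma ap_diff1: "ap (\<lambda>k. x k - y k) F = ap x F - ap y F" by (simp add: ap_def left_diff_distrib sum_subtractf)
lemma ap_sum1: "ap (\<lambda>k. \<Sum>i\<in>I. f i k) F = (\<Sum>i\<in>I. ap (f i) F)" by (simp add: ap_def sum_distrib_right) (rule sum.swap)
lemma ap2_diff1: "ap2 (\<lambda>a b. X a b - Y a b) G = ap2 X G - ap2 Y G" by (simp add: ap2_def left_diff_distrib sum_subtractf)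

lemma Phi_diff: "Phi (\<lambda>p. A p - B p) x = Phi A x - Phi B x" unfolding Phi_def by (rule ap_diff1)
lemma Psi_diff: "Psi (\<lambda>p. A p - B p) x = Psi A x - Psi B x" unfolding Psi_def by (rule ap_diff1)
lemma Phi_sum: "Phi (\<lambda>p. \<Sum>i\<in>I. W i p) x = (\<Sum>i\<in>I. Phi (W i) x)" unfolding Phi_def by (rule ap_sum1)
lemma Psi_sum: "Psi (\<lambda>p. \<Sum>i\<in>I. W i p) x = (\<Sum>i\<in>I. Psi (W i) x)" unfolding Psi_def by (rule ap_sum1)
lemma Phi_zero: "Phi (\<lambda>_. 0) x = 0" unfolding Phi_def by (simp add: ap_def)
lemma Psi_zero: "Psi (\<lambda>_. 0) x = 0" unfolding Psi_def by (simp add: ap_def)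

lemma RPhi_diff: "RPhi (\<lambda>p. A p - B p) v x = RPhi A v x - RPhi B v x"
  unfolding RPhi_def by (rule ap2_diff1)
lemma RPhi_lin: "RPhi A (\<lambda>s. \<Sum>j\<in>J. d j * f j s) x = (\<Sum>j\<in>J. d j * RPhi A (f j) x)"
  unfolding RPhi_def by (simp only: ap_sum ap_cmult ap2_sum ap2_cmult)
lemma RPhi_cmult: "RPhi A (\<lambda>s. c * f s) x = c * RPhi A f x"
  unfolding RPhi_def by (simp only: ap_cmult ap2_cmult)

lemma ap_cmult1: "ap (\<lambda>k. c * x k) F = c * ap x F" by (simp add: ap_def sum_distrib_left mult_ac)
lemma Phi_tens: "Phi (tens f h) x = f x * ap h E" by (simp add: Phi_def tens_def ap_cmult1)
lemma Psi_tens: "Psi (tens f h) z = uu f * h z" by (simp add: Psi_def tens_def ap_comm[of _ U])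

lemma chr_E: "chr E" unfolding chr_def by (simp add: emult eU)

lemma conv_fun: "conv C f g = (\<lambda>x. dd x (\<lambda>p q. f p * g q))" by (rule ext) (rule conv_cps)
lemma conv_E: "conv C f E x = f x" by (simp add: conv_cps counitR)

lemma chr_conv: assumes "chr f" "chr g" shows "chr (conv C f g)"
proof -
  have mf: "mm p q f = f p * f q" for p q using assms(1) unfolding chr_def by blast
  have mg: "mm p q g = g p * g q" for p q using assms(2) unfolding chr_def by blast
  have uf: "uu f = 1" using assms(1) unfolding chr_def by blast
  have ug: "uu g = 1" using assms(2) unfolding chr_def by blast
  have e: "\<And>a1 b1 a2 b2. f a1 * f b1 * (g a2 * g b2) = (f a1 * g a2) * (f b1 * g b2)" by (simp add: mult_ac)
  have "mm a b (conv C f g) = conv C f g a * conv C f g b" for a b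
  proof -
    have "mm a b (conv C f g) = mm a b (\<lambda>x. dd x (\<lambda>p q. f p * g q))" by (simp only: conv_fun)
    also have "\<dots> = dd a (\<lambda>a1 a2. dd b (\<lambda>b1 b2. (f a1 * g a2) * (f b1 * g b2)))"
      by (simp only: dmult ap_cmult ap_multc mf mg e)
    also have "\<dots> = conv C f g a * conv C f g b"
      by (simp only: ap2_cmult ap2_multc conv_cps)
    finally show ?thesis .
  qed
  moreover have "uu (conv C f g) = 1"
    by (simp only: conv_fun dU ap_cmult ap_multc uf ug mult_1_left)
  ultimately show ?thesis unfolding chr_def by blast
qed

lemma chr_dual: assumes "dual_grouplike M U \<alpha>" shows "chr \<alpha>"
proof -
  have d: "dcomult M \<alpha> = tens \<alpha> \<alpha>" and "pair \<alpha> U = 1" using assms unfolding dual_grouplike_def by auto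
  have m: "mm q p \<alpha> = \<alpha> p * \<alpha> q" for p q
  proof -
    have "dcomult M \<alpha> (p,q) = tens \<alpha> \<alpha> (p,q)" by (simp only: d)
    thus ?thesis by (simp add: dcomult_def tens_def pair_ap hmul_bas ap_comm)
  qed
  show ?thesis unfolding chr_def using m \<open>pair \<alpha> U = 1\<close> by (simp add: pair_ap ap_comm mult.commute)
qed

lemma gl_U: "gl U" unfolding gl_def by (simp add: dU0 eU)

lemma gl_grouplike: assumes "grouplike C E g" shows "gl g"
proof -
  have c: "comult C g = tens g g" and e: "pair E g = 1" using assms unfolding grouplike_def by auto
  have "ap g (\<lambda>k. C k p q) = g p * g q" for p q
  proof -
    have "comult C g (p,q) = tens g g (p,q)" by (simp only: c)
    thus ?thesis by (simp add: comult_ap tens_ap)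
  qed
  thus ?thesis unfolding gl_def using e by (simp add: pair_ap ap_comm)
qed

end

context hopf begin

lemma Phi_tens_fun: "Phi (tens f h) = (\<lambda>x. f x * ap h E)" by (rule ext) (rule Phi_tens)
lemma Psi_tens_fun: "Psi (tens f h) = (\<lambda>z. uu f * h z)" by (rule ext) (rule Psi_tens)

lemma u_form: "drinfeld_u M C S U E = (\<lambda>p. \<Sum>i\<in>UNIV. dmul M C S (tens (\<lambda>x. Sv x i) U) (tens E (bas i)) p)"
  unfolding drinfeld_u_def emb_dual_def emb_H_def dual_antipode_def by (simp add: pair_ap Sv_def)

lemma Phi_dmul_E: "Phi (dmul M C S A (tens E h)) x = ap h E * Phi A x"
proof -
  have "Phi (dmul M C S A (tens E h)) x = RPhi A (\<lambda>s. ap h E * E s) x"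
    by (simp only: Phi_dmul' Phi_tens_fun mult.commute[of "E _"])
  also have "\<dots> = ap h E * RPhi A E x" by (rule RPhi_cmult)
  also have "\<dots> = ap h E * Phi A x" by (simp only: RPhi_char[OF chr_E] conv_E)
  finally show ?thesis .
qed

lemma Phi_u: "Phi (drinfeld_u M C S U E) = E"
proof
  fix x
  have "Phi (drinfeld_u M C S U E) x = (\<Sum>i\<in>UNIV. ap (bas i) E * Phi (tens (\<lambda>x. Sv x i) U) x)"
    unfolding u_form Phi_sum Phi_dmul_E ..
  also have "\<dots> = (\<Sum>i\<in>UNIV. E i * Sv x i)" by (simp add: Phi_tens eU)
  also have "\<dots> = tt x E" by (simp add: ap_def mult.commute)
  also have "\<dots> = E x" by (rule T3)
  finally show "Phi (drinfeld_u M C S U E) x = E x" .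
qed

lemma Psi_dmul_pure: "Psi (dmul M C S (tens f U) Z) z = uu f * Psi Z z"
proof -
  have "Psi (dmul M C S (tens f U) Z) z = uu f * ap U (\<lambda>b. rt b Z z)"
    by (simp only: Psi_dmul Psi_tens_fun ap_cmult1)
  also have "\<dots> = uu f * Psi Z z" by (simp only: rt_gl[OF gl_U] ax_unitL)
  finally show ?thesis .
qed

lemma Sinv_U: "Sinv S U = U"
  using Sinv_S[of U] by (simp only: S1v)

lemma Psi_u: "Psi (drinfeld_u M C S U E) = U"
proof
  fix z
  have "Psi (drinfeld_u M C S U E) z = (\<Sum>i\<in>UNIV. uu (\<lambda>x. Sv x i) * Psi (tens E (bas i)) z)"
    unfolding u_form Psi_sum Psi_dmul_pure ..
  also have "\<dots> = (\<Sum>i\<in>UNIV. uu (\<lambda>x. Sv x i) * bas i z)" by (simp add: Psi_tens eU)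
  also have "\<dots> = uu (\<lambda>x. Sv x z)" by (simp add: bas_def)
  also have "\<dots> = Sinv S U z" by (simp add: Sinv_lin)
  also have "\<dots> = U z" by (simp only: Sinv_U)
  finally show "Psi (drinfeld_u M C S U E) z = U z" .
qed

lemma dpow_u: "Phi (dpow M C S U E (drinfeld_u M C S U E) m) = E \<and> Psi (dpow M C S U E (drinfeld_u M C S U E) m) = U"
proof (induction m)
  case 0
  show ?case by (auto simp: dunit_def Phi_tens Psi_tens eU)
next
  case (Suc m)
  have "Phi (dpow M C S U E (drinfeld_u M C S U E) (Suc m)) = E"
  proof
    fix x
    show "Phi (dpow M C S U E (drinfeld_u M C S U E) (Suc m)) x = E x"
      using Suc by (simp add: Phi_dmul' RPhi_char[OF chr_E] conv_E Phi_u)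
  qed
  moreover have "Psi (dpow M C S U E (drinfeld_u M C S U E) (Suc m)) = U"
  proof
    fix z
    show "Psi (dpow M C S U E (drinfeld_u M C S U E) (Suc m)) z = U z"
      using Suc by (simp add: Psi_dmul Psi_u rt_gl[OF gl_U] ax_unitL)
  qed
  ultimately show ?case ..
qed

lemma x_vals:
  fixes m :: nat
  assumes a: "chr \<alpha>" and g: "gl g"
  defines "x0 \<equiv> dmul M C S (dmul M C S (emb_dual U \<alpha>) (dpow M C S U E (drinfeld_u M C S U E) m)) (emb_H E g)"
  shows "Phi x0 = \<alpha>" and "Psi x0 = g"
proof -
  have gE: "ap g E = 1" using g unfolding gl_def by blast
  have ua: "uu \<alpha> = 1" using a unfolding chr_def by blast
  show "Phi x0 = \<alpha>"
  proof
    fix x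
    have "Phi x0 x = Phi (dmul M C S (tens \<alpha> U) (dpow M C S U E (drinfeld_u M C S U E) m)) x"
      unfolding x0_def emb_H_def emb_dual_def by (simp only: Phi_dmul_E gE mult_1_left)
    also have "\<dots> = \<alpha> x"
      using dpow_u[of m] by (simp add: Phi_dmul' RPhi_char[OF chr_E] conv_E Phi_tens eU)
    finally show "Phi x0 x = \<alpha> x" .
  qed
  have PA: "Psi (dmul M C S (tens \<alpha> U) (dpow M C S U E (drinfeld_u M C S U E) m)) = U"
    by (rule ext) (simp add: Psi_dmul_pure ua dpow_u)
  show "Psi x0 = g"
  proof
    fix z
    have "Psi x0 z = ap U (\<lambda>b. rt b (tens E g) z)"
      unfolding x0_def emb_H_def emb_dual_def by (simp only: Psi_dmul PA)
    also have "\<dots> = g z" by (simp add: rt_gl[OF gl_U] ax_unitL Psi_tens eU)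
    finally show "Psi x0 z = g z" .
  qed
qed

end


fun cpw :: "('i::finite \<Rightarrow> 'i \<Rightarrow> 'i \<Rightarrow> complex) \<Rightarrow> 'i vec \<Rightarrow> 'i vec \<Rightarrow> nat \<Rightarrow> 'i vec" where
  "cpw C e f 0 = e" | "cpw C e f (Suc n) = conv C f (cpw C e f n)"
fun hpw :: "('i::finite \<Rightarrow> 'i \<Rightarrow> 'i \<Rightarrow> complex) \<Rightarrow> 'i vec \<Rightarrow> 'i vec \<Rightarrow> nat \<Rightarrow> 'i vec" where
  "hpw M u f 0 = u" | "hpw M u f (Suc n) = hmul M f (hpw M u f n)"

lemma pascal_sum:
  "(\<Sum>j\<le>Suc k. of_nat (Suc k choose j) * f j) = (\<Sum>j\<le>k. of_nat (k choose j) * f j) + (\<Sum>j\<le>k. of_nat (k choose j) * (f (Suc j) :: complex))"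
proof -
  have A: "(\<Sum>j\<le>k. of_nat (k choose j) * f j) = f 0 + (\<Sum>j\<le>k. of_nat (k choose Suc j) * f (Suc j))"
  proof -
    have "(\<Sum>j\<le>Suc k. of_nat (k choose j) * f j) = (\<Sum>j\<le>k. of_nat (k choose j) * f j)"
      by (simp add: sum.atMost_Suc binomial_eq_0)
    moreover have "(\<Sum>j\<le>Suc k. of_nat (k choose j) * f j) = f 0 + (\<Sum>j\<le>k. of_nat (k choose Suc j) * f (Suc j))"
      by (subst sum.atMost_Suc_shift) simp
    ultimately show ?thesis by (metis (no_types))
  qed
  have "(\<Sum>j\<le>Suc k. of_nat (Suc k choose j) * f j) = f 0 + (\<Sum>j\<le>k. of_nat (Suc k choose Suc j) * f (Suc j))"
    by (subst sum.atMost_Suc_shift) simp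
  also have "\<dots> = f 0 + (\<Sum>j\<le>k. of_nat (k choose Suc j) * f (Suc j)) + (\<Sum>j\<le>k. of_nat (k choose j) * f (Suc j))"
    by (simp add: distrib_right sum.distrib)
  finally show ?thesis using A by simp
qed

lemma binom_gen:
  fixes a nn :: "nat \<Rightarrow> 'i \<Rightarrow> complex" and L :: "('i \<Rightarrow> complex) \<Rightarrow> 'i \<Rightarrow> complex"
  assumes aS: "\<And>k. a (Suc k) = (\<lambda>s. a k s + L (a k) s)" and nS: "\<And>j. nn (Suc j) = L (nn j)"
    and a0: "a 0 = nn 0"
    and lin: "\<And>(d::nat \<Rightarrow> complex) f k. L (\<lambda>s. \<Sum>j\<le>k. d j * f j s) = (\<lambda>s. \<Sum>j\<le>k. d j * L (f j) s)"
  shows "a k = (\<lambda>s. \<Sum>j\<le>k. of_nat (k choose j) * nn j s)"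
proof (induction k)
  case 0 thus ?case using a0 by simp
next
  case (Suc k)
  have "a (Suc k) = (\<lambda>s. a k s + L (a k) s)" by (rule aS)
  also have "\<dots> = (\<lambda>s. (\<Sum>j\<le>k. of_nat (k choose j) * nn j s) + (\<Sum>j\<le>k. of_nat (k choose j) * nn (Suc j) s))"
    unfolding Suc lin nS ..
  also have "\<dots> = (\<lambda>s. \<Sum>j\<le>Suc k. of_nat (Suc k choose j) * nn j s)"
    by (rule ext) (rule pascal_sum[symmetric])
  finally show ?case .
qed

lemma trunc_sum:
  assumes "\<And>j. n \<le> j \<Longrightarrow> v j = 0"
  shows "(\<Sum>j\<le>k. of_nat (k choose j) * v j) = (\<Sum>j<n. of_nat (k choose j) * (v j :: complex))"
proof -
  have "(\<Sum>j\<le>k. of_nat (k choose j) * v j) = (\<Sum>j<Suc (k+n). of_nat (k choose j) * v j)"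
    by (rule sum.mono_neutral_left) auto
  also have "\<dots> = (\<Sum>j<n. of_nat (k choose j) * v j)"
    by (rule sum.mono_neutral_right) (auto simp: assms)
  finally show ?thesis .
qed

lemma shift_sum:
  "(\<Sum>j\<le>n. d j * (a (Suc j) - a j)) = (\<Sum>j\<le>Suc n. ((if j = 0 then 0 else d (j - 1)) - (if j \<le> n then d j else 0)) * (a j :: complex))"
proof -
  have "(\<Sum>j\<le>Suc n. ((if j = 0 then 0 else d (j - 1)) - (if j \<le> n then d j else 0)) * a j)
     = (\<Sum>j\<le>Suc n. (if j = 0 then 0 else d (j - 1)) * a j) - (\<Sum>j\<le>Suc n. (if j \<le> n then d j else 0) * a j)"
    by (simp add: left_diff_distrib sum_subtractf)
  also have "(\<Sum>j\<le>Suc n. (if j = 0 then 0 else d (j - 1)) * a j) = (\<Sum>j\<le>n. d j * a (Suc j))"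
    by (subst sum.atMost_Suc_shift) simp
  also have "(\<Sum>j\<le>Suc n. (if j \<le> n then d j else 0) * a j) = (\<Sum>j\<le>n. d j * a j)"
    by (simp add: sum.atMost_Suc)
  finally show ?thesis by (simp add: right_diff_distrib sum_subtractf)
qed

context hopf begin

lemma conv_diff1: "conv C (\<lambda>s. a s - b s) v x = conv C a v x - conv C b v x"
  by (simp add: conv_cps left_diff_distrib)
lemma conv_add1: "conv C (\<lambda>s. a s + b s) v x = conv C a v x + conv C b v x"
  by (simp add: conv_cps distrib_right)
lemma conv_lin2: "conv C f (\<lambda>s. \<Sum>j\<in>J. d j * h j s) x = (\<Sum>j\<in>J. d j * conv C f (h j) x)"
  by (simp add: conv_cps sum_distrib_left mult.left_commute)
lemma conv_El: "conv C E f x = f x" by (simp add: conv_cps counitL)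
lemma conv_zero2: "conv C f (\<lambda>_. 0) = (\<lambda>_. 0)" by (rule ext) (simp add: conv_cps)

lemma hmul_diff1: "hmul M (\<lambda>s. a s - b s) v z = hmul M a v z - hmul M b v z"
  by (simp add: hmul_ap ap_diff1)
lemma hmul_add1: "hmul M (\<lambda>s. a s + b s) v z = hmul M a v z + hmul M b v z"
  by (simp add: hmul_def distrib_right sum.distrib)
lemma hmul_lin2: "hmul M f (\<lambda>s. \<Sum>j\<in>J. d j * h j s) z = (\<Sum>j\<in>J. d j * hmul M f (h j) z)"
  by (simp add: hmul_ap ap_sum1 ap_cmult1)
lemma hmul_zero2: "hmul M f (\<lambda>_. 0) = (\<lambda>_. 0)" by (rule ext) (simp add: hmul_ap ap_def)

lemma chr_cpw: assumes "chr \<alpha>" shows "chr (cpw C E \<alpha> k)"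
  by (induction k) (simp_all add: chr_E chr_conv assms)

lemma gl_hmul: assumes "gl a" "gl v" shows "gl (hmul M a v)"
proof -
  have aE: "ap a E = 1" using assms(1) unfolding gl_def by blast
  have vE: "ap v E = 1" using assms(2) unfolding gl_def by blast
  have "ap (hmul M a v) (\<lambda>k. C k p q) = hmul M a v p * hmul M a v q" for p q
  proof -
    have "ap (hmul M a v) (\<lambda>k. C k p q) = ap a (\<lambda>i. ap v (\<lambda>j. dd i (\<lambda>i1 i2. dd j (\<lambda>j1 j2. M i1 j1 p * M i2 j2 q))))"
      by (simp only: ap_hmul dmult0)
    also have "\<dots> = ap a (\<lambda>i. dd i (\<lambda>i1 i2. ap v (\<lambda>j. dd j (\<lambda>j1 j2. M i1 j1 p * M i2 j2 q))))"
      by (rule arg_cong[where f="ap a"], rule ext, rule ap2_ap_swap[symmetric])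
    also have "\<dots> = ap a (\<lambda>i1. ap a (\<lambda>i2. ap v (\<lambda>j1. ap v (\<lambda>j2. M i1 j1 p * M i2 j2 q))))"
      by (simp only: gl_dd[OF assms(1)] gl_dd[OF assms(2)])
    also have "\<dots> = hmul M a v p * hmul M a v q"
      by (simp only: ap_cmult ap_multc hmul_ap)
    finally show ?thesis .
  qed
  moreover have "ap (hmul M a v) E = 1"
    by (simp only: ap_hmul emult ap_cmult ap_multc aE vE mult_1_left)
  ultimately show ?thesis unfolding gl_def by blast
qed

lemma gl_hpw: assumes "gl g" shows "gl (hpw M U g k)"
  by (induction k) (simp_all add: gl_U gl_hmul assms)

end

context hopf begin

lemma Phi_dunit: "Phi (dunit U E) = E"
  by (rule ext) (simp add: dunit_def Phi_tens eU)
lemma Psi_dunit: "Psi (dunit U E) = U"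
  by (rule ext) (simp add: dunit_def Psi_tens eU)

lemma Psi_diff_fun: "Psi (\<lambda>p. A p - B p) = (\<lambda>x. Psi A x - Psi B x)"
  by (rule ext) (rule Psi_diff)

lemma alpha_chain:
  assumes a: "chr \<alpha>" and px: "Phi x0 = \<alpha>"
  shows "Phi (dpow M C S U E (\<lambda>p. x0 p - dunit U E p) n) = cpw C E (\<lambda>s. \<alpha> s - E s) n
     \<and> (\<exists>d. cpw C E (\<lambda>s. \<alpha> s - E s) n = (\<lambda>s. \<Sum>j\<le>n. d j * cpw C E \<alpha> j s))"
proof (induction n)
  case 0
  show ?case by (rule conjI, simp add: Phi_dunit, rule exI[of _ "\<lambda>_. 1"], simp)
next
  case (Suc n)
  then obtain d where IH: "Phi (dpow M C S U E (\<lambda>p. x0 p - dunit U E p) n) = cpw C E (\<lambda>s. \<alpha> s - E s) n"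
    and dd: "cpw C E (\<lambda>s. \<alpha> s - E s) n = (\<lambda>s. \<Sum>j\<le>n. d j * cpw C E \<alpha> j s)" by blast
  have R: "Phi (dpow M C S U E (\<lambda>p. x0 p - dunit U E p) (Suc n)) x = (\<Sum>j\<le>n. d j * (cpw C E \<alpha> (Suc j) x - cpw C E \<alpha> j x))" for x
  proof -
    have "Phi (dpow M C S U E (\<lambda>p. x0 p - dunit U E p) (Suc n)) x
        = RPhi x0 (\<lambda>s. \<Sum>j\<le>n. d j * cpw C E \<alpha> j s) x - RPhi (dunit U E) (\<lambda>s. \<Sum>j\<le>n. d j * cpw C E \<alpha> j s) x"
      by (simp only: dpow.simps Phi_dmul' IH dd RPhi_diff)
    also have "\<dots> = (\<Sum>j\<le>n. d j * conv C \<alpha> (cpw C E \<alpha> j) x) - (\<Sum>j\<le>n. d j * conv C E (cpw C E \<alpha> j) x)"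
      by (simp only: RPhi_lin RPhi_char[OF chr_cpw[OF a]] px Phi_dunit)
    also have "\<dots> = (\<Sum>j\<le>n. d j * (cpw C E \<alpha> (Suc j) x - cpw C E \<alpha> j x))"
      by (simp add: conv_El right_diff_distrib sum_subtractf)
    finally show ?thesis .
  qed
  have N: "cpw C E (\<lambda>s. \<alpha> s - E s) (Suc n) x = (\<Sum>j\<le>n. d j * (cpw C E \<alpha> (Suc j) x - cpw C E \<alpha> j x))" for x
    by (simp add: dd conv_diff1 conv_lin2 conv_El right_diff_distrib sum_subtractf)
  have "Phi (dpow M C S U E (\<lambda>p. x0 p - dunit U E p) (Suc n)) = cpw C E (\<lambda>s. \<alpha> s - E s) (Suc n)"
    using R N by auto
  moreover have "\<exists>d. cpw C E (\<lambda>s. \<alpha> s - E s) (Suc n) = (\<lambda>s. \<Sum>j\<le>Suc n. d j * cpw C E \<alpha> j s)"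
    by (rule exI, rule ext, subst N, rule shift_sum)
  ultimately show ?case by blast
qed

lemma g_chain:
  assumes g: "gl g" and px: "Psi x0 = g"
  shows "Psi (dpow M C S U E (\<lambda>p. x0 p - dunit U E p) n) = hpw M U (\<lambda>s. g s - U s) n"
proof (induction n)
  case 0 show ?case by (simp add: Psi_dunit)
next
  case (Suc n)
  show ?case
  proof
    fix z
    have "Psi (dpow M C S U E (\<lambda>p. x0 p - dunit U E p) (Suc n)) z
       = ap (\<lambda>b. g b - U b) (\<lambda>b. rt b (dpow M C S U E (\<lambda>p. x0 p - dunit U E p) n) z)"
      by (simp add: Psi_dmul Psi_diff_fun px Psi_dunit)
    also have "\<dots> = hmul M (\<lambda>s. g s - U s) (hpw M U (\<lambda>s. g s - U s) n) z"
      by (simp add: ap_diff1 rt_gl[OF g] rt_gl[OF gl_U] Suc hmul_diff1)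
    finally show "Psi (dpow M C S U E (\<lambda>p. x0 p - dunit U E p) (Suc n)) z = hpw M U (\<lambda>s. g s - U s) (Suc n) z"
      by simp
  qed
qed

end

context hopf begin

lemma main_hopf:
  fixes m :: nat
  assumes gg: "grouplike C E g" and ga: "dual_grouplike M U \<alpha>"
    and un: "unipotent M C S U E
           (dmul M C S (dmul M C S (emb_dual U \<alpha>) (dpow M C S U E (drinfeld_u M C S U E) m))
              (emb_H E g))"
  shows "g = U \<and> \<alpha> = E"
proof -
  define x0 where "x0 = dmul M C S (dmul M C S (emb_dual U \<alpha>) (dpow M C S U E (drinfeld_u M C S U E) m)) (emb_H E g)"
  have a: "chr \<alpha>" by (rule chr_dual[OF ga])
  have g: "gl g" by (rule gl_grouplike[OF gg])
  have px: "Phi x0 = \<alpha>" unfolding x0_def by (rule x_vals(1)[OF a g])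
  have qx: "Psi x0 = g" unfolding x0_def by (rule x_vals(2)[OF a g])
  obtain n where Z: "dpow M C S U E (\<lambda>p. x0 p - dunit U E p) n = (\<lambda>_. 0)"
    using un unfolding unipotent_def x0_def by blast
  define Np where "Np = cpw C E (\<lambda>s. \<alpha> s - E s)"
  define ap' where "ap' = cpw C E \<alpha>"
  have Nn: "Np n = (\<lambda>_. 0)"
  proof -
    have "Np n = Phi (dpow M C S U E (\<lambda>p. x0 p - dunit U E p) n)"
      unfolding Np_def using alpha_chain[OF a px, of n] by simp
    also have "\<dots> = (\<lambda>_. 0)" unfolding Z by (rule ext) (rule Phi_zero)
    finally show ?thesis .
  qed
  have Nj: "Np j = (\<lambda>_. 0)" if "n \<le> j" for j
    using that
  proof (induction j rule: dec_induct)
    case base thus ?case by (rule Nn)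
  next
    case (step j) thus ?case by (simp add: Np_def conv_zero2)
  qed
  have bin: "ap' k = (\<lambda>s. \<Sum>j\<le>k. of_nat (k choose j) * Np j s)" for k
  proof (rule binom_gen[where L = "conv C (\<lambda>s. \<alpha> s - E s)"])
    fix k
    show "ap' (Suc k) = (\<lambda>s. ap' k s + conv C (\<lambda>s. \<alpha> s - E s) (ap' k) s)"
    proof
      fix s
      have "ap' (Suc k) s = conv C (\<lambda>s. E s + (\<alpha> s - E s)) (ap' k) s" by (simp add: ap'_def)
      also have "\<dots> = ap' k s + conv C (\<lambda>s. \<alpha> s - E s) (ap' k) s" by (simp only: conv_add1 conv_El)
      finally show "ap' (Suc k) s = ap' k s + conv C (\<lambda>s. \<alpha> s - E s) (ap' k) s" .
    qed
  next
    fix j show "Np (Suc j) = conv C (\<lambda>s. \<alpha> s - E s) (Np j)" by (simp add: Np_def)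
  next
    show "ap' 0 = Np 0" by (simp add: Np_def ap'_def)
  next
    fix d :: "nat \<Rightarrow> complex" and f k
    show "conv C (\<lambda>s. \<alpha> s - E s) (\<lambda>s. \<Sum>j\<le>k. d j * f j s) = (\<lambda>s. \<Sum>j\<le>k. d j * conv C (\<lambda>s. \<alpha> s - E s) (f j) s)"
      by (rule ext) (rule conv_lin2)
  qed
  have rep: "ap (ap' k) h = (\<Sum>j<n. of_nat (k choose j) * ap (Np j) h)" for k h
  proof -
    have "ap' k = (\<lambda>s. \<Sum>j<n. of_nat (k choose j) * Np j s)"
      unfolding bin by (rule ext) (rule trunc_sum, simp add: Nj)
    thus ?thesis by (simp add: ap_sum1 ap_cmult1)
  qed
  have chk: "chr (ap' k)" for k unfolding ap'_def by (rule chr_cpw[OF a])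
  have sq: "\<exists>h'. \<forall>k. ap (ap' k) h' = (ap (ap' k) h)^2" for h
  proof (intro exI allI)
    fix k
    have mk: "mm p q (ap' k) = ap' k p * ap' k q" for p q using chk[of k] unfolding chr_def by blast
    have "ap (ap' k) (hmul M h h) = ap (hmul M h h) (ap' k)" by (rule ap_comm)
    also have "\<dots> = ap h (ap' k) * ap h (ap' k)" by (simp only: ap_hmul mk ap_cmult ap_multc)
    also have "\<dots> = (ap (ap' k) h)^2" by (simp add: ap_comm power2_eq_square)
    finally show "ap (ap' k) (hmul M h h) = (ap (ap' k) h)^2" .
  qed
  have cst: "ap (ap' k) h = ap (ap' 0) h" for k h
    by (rule binom_poly_const[where F = "\<lambda>h k. ap (ap' k) h" and c = "\<lambda>h j. ap (Np j) h", OF rep sq])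
  have aE: "\<alpha> = E"
  proof
    fix j
    have "ap (ap' 1) (bas j) = ap (ap' 0) (bas j)" by (rule cst)
    thus "\<alpha> j = E j" by (simp add: ap'_def conv_E)
  qed
  define Gp where "Gp = hpw M U (\<lambda>s. g s - U s)"
  define gp where "gp = hpw M U g"
  have Gn: "Gp n = (\<lambda>_. 0)"
  proof -
    have "Gp n = Psi (dpow M C S U E (\<lambda>p. x0 p - dunit U E p) n)"
      unfolding Gp_def using g_chain[OF g qx, of n] by simp
    also have "\<dots> = (\<lambda>_. 0)" unfolding Z by (rule ext) (rule Psi_zero)
    finally show ?thesis .
  qed
  have Gj: "Gp j = (\<lambda>_. 0)" if "n \<le> j" for j
    using that
  proof (induction j rule: dec_induct)
    case base thus ?case by (rule Gn)
  next
    case (step j) thus ?case by (simp add: Gp_def hmul_zero2)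
  qed
  have binG: "gp k = (\<lambda>s. \<Sum>j\<le>k. of_nat (k choose j) * Gp j s)" for k
  proof (rule binom_gen[where L = "hmul M (\<lambda>s. g s - U s)"])
    fix k
    show "gp (Suc k) = (\<lambda>s. gp k s + hmul M (\<lambda>s. g s - U s) (gp k) s)"
    proof
      fix s
      have "gp (Suc k) s = hmul M (\<lambda>s. U s + (g s - U s)) (gp k) s" by (simp add: gp_def)
      also have "\<dots> = gp k s + hmul M (\<lambda>s. g s - U s) (gp k) s" by (simp only: hmul_add1 ax_unitL)
      finally show "gp (Suc k) s = gp k s + hmul M (\<lambda>s. g s - U s) (gp k) s" .
    qed
  next
    fix j show "Gp (Suc j) = hmul M (\<lambda>s. g s - U s) (Gp j)" by (simp add: Gp_def)
  next
    show "gp 0 = Gp 0" by (simp add: Gp_def gp_def)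
  next
    fix d :: "nat \<Rightarrow> complex" and f k
    show "hmul M (\<lambda>s. g s - U s) (\<lambda>s. \<Sum>j\<le>k. d j * f j s) = (\<lambda>s. \<Sum>j\<le>k. d j * hmul M (\<lambda>s. g s - U s) (f j) s)"
      by (rule ext) (rule hmul_lin2)
  qed
  have repG: "ap psi (gp k) = (\<Sum>j<n. of_nat (k choose j) * ap psi (Gp j))" for k psi
  proof -
    have "gp k = (\<lambda>s. \<Sum>j<n. of_nat (k choose j) * Gp j s)"
      unfolding binG by (rule ext) (rule trunc_sum, simp add: Gj)
    thus ?thesis by simp
  qed
  have glk: "gl (gp k)" for k unfolding gp_def by (rule gl_hpw[OF g])
  have sqG: "\<exists>psi'. \<forall>k. ap psi' (gp k) = (ap psi (gp k))^2" for psi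
  proof (intro exI allI)
    fix k
    have "ap (conv C psi psi) (gp k) = ap (gp k) (\<lambda>x. dd x (\<lambda>p q. psi p * psi q))"
      by (simp only: conv_fun) (rule ap_comm)
    also have "\<dots> = ap (gp k) psi * ap (gp k) psi"
      by (simp only: gl_dd[OF glk] ap_cmult ap_multc)
    also have "\<dots> = (ap psi (gp k))^2" by (simp add: ap_comm power2_eq_square)
    finally show "ap (conv C psi psi) (gp k) = (ap psi (gp k))^2" .
  qed
  have cstG: "ap psi (gp k) = ap psi (gp 0)" for k psi
    by (rule binom_poly_const[where F = "\<lambda>psi k. ap psi (gp k)" and c = "\<lambda>psi j. ap psi (Gp j)", OF repG sqG])
  have gU: "g = U"
  proof
    fix j
    have "ap (bas j) (gp 1) = ap (bas j) (gp 0)" by (rule cstG)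
    thus "g j = U j" by (simp add: gp_def ax_unitR)
  qed
  show ?thesis using aE gU by blast
qed

end

theorem mainTheorem10:
  fixes M C :: "'i::finite \<Rightarrow> 'i \<Rightarrow> 'i \<Rightarrow> complex"
    and U E g \<alpha> :: "'i vec"
    and S :: "'i \<Rightarrow> 'i \<Rightarrow> complex"
    and m :: nat
  assumes "hopf_algebra M U C E S"
    and "grouplike C E g"
    and "dual_grouplike M U \<alpha>"
    and "m > 0"
    and "unipotent M C S U E
           (dmul M C S (dmul M C S (emb_dual U \<alpha>) (dpow M C S U E (drinfeld_u M C S U E) m))
              (emb_H E g))"
  shows "g = U \<and> \<alpha> = E"
proof -
  interpret hopf M U C E S by (rule hopf.intro) (rule assms(1))
  show ?thesis by (rule main_hopf[OF assms(2) assms(3) assms(5)])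
qed


end
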